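(* Let $G$ be a finite group, $\hat G$ its set of irreducible unitary representations (up to equivalence), and let $\rho_A:G\to U(\mathcal{H}_A)$, $\rho_B:G\to U(\mathcal{H}_B)$ be unitary representations on finite-dimensional complex Hilbert spaces. Let $\rho(g):=\rho_A(g)\otimes\rho_B(g)$ on $\mathcal{H}_A\otimes\mathcal{H}_B$. For $\lambda\in\hat G$ let $\mathcal{H}_A^\lambda\cong V_\lambda\otimes\mathbb{C}^{m_\lambda}$ and $\mathcal{H}_B^\lambda\cong V_\lambda\otimes\mathbb{C}^{n_\lambda}$ be the $\lambda$-isotypic components, so $\mathcal{H}_A=\bigoplus_\lambda\mathcal{H}_A^\lambda$, $\mathcal{H}_B=\bigoplus_\lambda\mathcal{H}_B^\lambda$, and define $\mathcal{K}_G:=\bigoplus_{\lambda\in\hat G}\mathcal{H}_A^\lambda\otimes\mathcal{H}_B^\lambda$. Let $T_A\in\operatorname{End}_G(\mathcal{H}_A)$ and $T_B\in\operatorname{End}_G(\mathcal{H}_B)$ be self-adjoint and $K:=T_A\otimes I-I\otimes T_B$. Then: (i) $K$ commutes with $\rho(g)$ for all $g\in G$; (ii) if there are scalars $a_\lambda$ ($\lambda\in\hat G$) such that $T_A$ acts as $a_\lambda I$ on $\mathcal{H}_A^\lambda$ and $T_B$ acts as $a_\lambda I$ on $\mathcal{H}_B^\lambda$ for all $\lambda$, then $\mathcal{K}_G\subseteq\ker(K)$; (iii) if moreover $T_A=\rho_A(z)$ and $T_B=\rho_B(z)$ for a central element $z\in Z(\mathbb{C}[G])$ (extending $\rho_A,\rho_B$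 linearly), acting by the scalar $\alpha_\lambda$ on $V_\lambda$, and the map $\lambda\mapsto\alpha_\lambda$ is injective on $\hat G$, then $\ker(K)=\mathcal{K}_G$.
   Context: $\operatorname{End}_G(\mathcal{H}_A)$ denotes the operators on $\mathcal{H}_A$ commuting with $\rho_A(g)$ for all $g\in G$ (similarly for $B$). $Z(\mathbb{C}[G])$ is the center of the group algebra. $\mathcal{K}_G$ is called the diagonal isotypic subspace, and $\ker(K)$ the synchronization subspace. *)

theory Defs
  imports "HOL-Algebra.Group" "Jordan_Normal_Form.Matrix"
begin

text \<open>Finite-dimensional complex Hilbert spaces are modelled as coordinate spaces
  carrier_vec d of complex vectors (standard inner product); operators as complex matrices.\<close>

definition adj :: "complex mat \<Rightarrow> complex mat" where
  "adj A = mat (dim_col A) (dim_row A) (\<lambda>(i,j). cnj (A $$ (j,i)))"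

definition unitary_mat :: "nat \<Rightarrow> complex mat \<Rightarrow> bool" where
  "unitary_mat d U \<longleftrightarrow> U \<in> carrier_mat d d \<and> U * adj U = 1\<^sub>m d \<and> adj U * U = 1\<^sub>m d"

definition self_adjoint :: "complex mat \<Rightarrow> bool" where
  "self_adjoint T \<longleftrightarrow> adj T = T"

definition unitary_rep :: "('g, 'b) monoid_scheme \<Rightarrow> nat \<Rightarrow> ('g \<Rightarrow> complex mat) \<Rightarrow> bool" where
  "unitary_rep G d \<rho> \<longleftrightarrow>
     (\<forall>g\<in>carrier G. unitary_mat d (\<rho> g)) \<and>
     (\<forall>g\<in>carrier G. \<forall>h\<in>carrier G. \<rho> (g \<otimes>\<^bsub>G\<^esub> h) = \<rho> g * \<rho> h)"

definition is_subspace :: "nat \<Rightarrow> complex vec set \<Rightarrow> bool" where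
  "is_subspace d W \<longleftrightarrow> W \<subseteq> carrier_vec d \<and> 0\<^sub>v d \<in> W \<and>
     (\<forall>u\<in>W. \<forall>v\<in>W. u + v \<in> W) \<and> (\<forall>c. \<forall>u\<in>W. c \<cdot>\<^sub>v u \<in> W)"

definition span_in :: "nat \<Rightarrow> complex vec set \<Rightarrow> complex vec set" where
  "span_in d S = \<Inter>{W. is_subspace d W \<and> S \<subseteq> W}"

definition irreducible_rep :: "('g, 'b) monoid_scheme \<Rightarrow> nat \<Rightarrow> ('g \<Rightarrow> complex mat) \<Rightarrow> bool" where
  "irreducible_rep G d \<sigma> \<longleftrightarrow> unitary_rep G d \<sigma> \<and> d > 0 \<and>
     (\<forall>W. is_subspace d W \<and> (\<forall>g\<in>carrier G. \<forall>v\<in>W. \<sigma> g *\<^sub>v v \<in> W)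
          \<longrightarrow> W = {0\<^sub>v d} \<or> W = carrier_vec d)"

text \<open>Elements of \<open>\<hat>G\<close> are represented by irreducible unitary representations (dimension, map);
  equivalence of representations:\<close>
definition equiv_rep :: "('g, 'b) monoid_scheme \<Rightarrow> nat \<times> ('g \<Rightarrow> complex mat)
     \<Rightarrow> nat \<times> ('g \<Rightarrow> complex mat) \<Rightarrow> bool" where
  "equiv_rep G lam mu \<longleftrightarrow> fst lam = fst mu \<and>
     (\<exists>P Q. P \<in> carrier_mat (fst lam) (fst lam) \<and> Q \<in> carrier_mat (fst lam) (fst lam) \<and>
        P * Q = 1\<^sub>m (fst lam) \<and> Q * P = 1\<^sub>m (fst lam) \<and>
        (\<forall>g\<in>carrier G. P * snd lam g = snd mu g * P))"

definition irreps :: "('g, 'b) monoid_scheme \<Rightarrow> (nat \<times> ('g \<Rightarrow> complex mat)) set" where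
  "irreps G = {(d, \<sigma>). irreducible_rep G d \<sigma>}"

definition isotypic :: "('g, 'b) monoid_scheme \<Rightarrow> nat \<Rightarrow> ('g \<Rightarrow> complex mat)
     \<Rightarrow> nat \<times> ('g \<Rightarrow> complex mat) \<Rightarrow> complex vec set" where
  "isotypic G m \<rho> lam = span_in m
     {\<Phi> *\<^sub>v v | \<Phi> v. \<Phi> \<in> carrier_mat m (fst lam) \<and> v \<in> carrier_vec (fst lam) \<and>
         (\<forall>g\<in>carrier G. \<rho> g * \<Phi> = \<Phi> * snd lam g)}"

text \<open>Kronecker (tensor) products; C^m \<otimes> C^n = C^(m*n), index (i,k) \<mapsto> i*n+k.\<close>
definition kron :: "complex mat \<Rightarrow> complex mat \<Rightarrow> complex mat" where
  "kron A B = mat (dim_row A * dim_row B) (dim_col A * dim_col B)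
     (\<lambda>(i,j). A $$ (i div dim_row B, j div dim_col B) * B $$ (i mod dim_row B, j mod dim_col B))"

definition kron_vec :: "complex vec \<Rightarrow> complex vec \<Rightarrow> complex vec" where
  "kron_vec u v = vec (dim_vec u * dim_vec v) (\<lambda>i. u $ (i div dim_vec v) * v $ (i mod dim_vec v))"

definition tensor_sub :: "nat \<Rightarrow> nat \<Rightarrow> complex vec set \<Rightarrow> complex vec set \<Rightarrow> complex vec set" where
  "tensor_sub m n S T = span_in (m * n) {kron_vec u v | u v. u \<in> S \<and> v \<in> T}"

definition diag_isotypic :: "('g, 'b) monoid_scheme \<Rightarrow> nat \<Rightarrow> ('g \<Rightarrow> complex mat)
     \<Rightarrow> nat \<Rightarrow> ('g \<Rightarrow> complex mat) \<Rightarrow> complex vec set" where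
  "diag_isotypic G m \<rho>A n \<rho>B =
     span_in (m * n) (\<Union>lam\<in>irreps G. tensor_sub m n (isotypic G m \<rho>A lam) (isotypic G n \<rho>B lam))"

definition ker_mat :: "nat \<Rightarrow> complex mat \<Rightarrow> complex vec set" where
  "ker_mat d K = {v \<in> carrier_vec d. K *\<^sub>v v = 0\<^sub>v d}"

definition End_G :: "('g, 'b) monoid_scheme \<Rightarrow> nat \<Rightarrow> ('g \<Rightarrow> complex mat) \<Rightarrow> complex mat set" where
  "End_G G d \<rho> = {T \<in> carrier_mat d d. \<forall>g\<in>carrier G. T * \<rho> g = \<rho> g * T}"

text \<open>Group algebra C[G] as functions carrier G \<rightarrow> C with convolution; its centre.\<close>
definition conv :: "('g, 'b) monoid_scheme \<Rightarrow> ('g \<Rightarrow> complex) \<Rightarrow> ('g \<Rightarrow> complex) \<Rightarrow> 'g \<Rightarrow> complex" where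
  "conv G x y g = (\<Sum>h\<in>carrier G. x h * y (inv\<^bsub>G\<^esub> h \<otimes>\<^bsub>G\<^esub> g))"

definition group_alg_center :: "('g, 'b) monoid_scheme \<Rightarrow> ('g \<Rightarrow> complex) set" where
  "group_alg_center G = {z. \<forall>x. \<forall>g\<in>carrier G. conv G z x g = conv G x z g}"

definition rep_alg :: "('g, 'b) monoid_scheme \<Rightarrow> nat \<Rightarrow> ('g \<Rightarrow> complex mat) \<Rightarrow> ('g \<Rightarrow> complex) \<Rightarrow> complex mat" where
  "rep_alg G d \<rho> z = mat d d (\<lambda>(i,j). \<Sum>g\<in>carrier G. z g * \<rho> g $$ (i,j))"

end

theory Submission
  imports Defs "Jordan_Normal_Form.Determinant"
begin


section \<open>Spans\<close>

lemma subspace_carrier: "is_subspace d (carrier_vec d)"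
  unfolding is_subspace_def by auto

lemma span_in_inc: "S \<subseteq> span_in d S"
  unfolding span_in_def by auto

lemma span_in_min: "is_subspace d W \<Longrightarrow> S \<subseteq> W \<Longrightarrow> span_in d S \<subseteq> W"
  unfolding span_in_def by auto

lemma span_in_subspace: assumes "S \<subseteq> carrier_vec d" shows "is_subspace d (span_in d S)"
proof -
  have ne: "carrier_vec d \<in> {W. is_subspace d W \<and> S \<subseteq> W}" using assms subspace_carrier by auto
  show ?thesis unfolding is_subspace_def span_in_def
    using ne by (auto simp: is_subspace_def)
qed

lemma span_in_carrier: "S \<subseteq> carrier_vec d \<Longrightarrow> span_in d S \<subseteq> carrier_vec d"
  using span_in_subspace unfolding is_subspace_def by blast

lemma subspace_sum:
  assumes W: "is_subspace d W" and "finite J" and "\<forall>j\<in>J. f j \<in> W"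
  shows "vec d (\<lambda>i. \<Sum>j\<in>J. c j * f j $ i) \<in> W"
  using assms(2,3)
proof (induction J rule: finite_induct)
  case empty
  have "vec d (\<lambda>i. \<Sum>j\<in>{}. c j * f j $ i) = 0\<^sub>v d" by auto
  then show ?case using W unfolding is_subspace_def by auto
next
  case (insert x F)
  have fx: "f x \<in> carrier_vec d" using insert W unfolding is_subspace_def by auto
  have "vec d (\<lambda>i. \<Sum>j\<in>insert x F. c j * f j $ i) = c x \<cdot>\<^sub>v f x + vec d (\<lambda>i. \<Sum>j\<in>F. c j * f j $ i)"
    using insert fx by (auto simp: sum.insert)
  moreover have "c x \<cdot>\<^sub>v f x \<in> W" using W insert unfolding is_subspace_def by auto
  ultimately show ?case using W insert unfolding is_subspace_def by auto
qed

lemma subspace_zero: "is_subspace d W \<Longrightarrow> 0\<^sub>v d \<in> W" unfolding is_subspace_def by auto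
lemma subspace_add: "is_subspace d W \<Longrightarrow> u \<in> W \<Longrightarrow> v \<in> W \<Longrightarrow> u + v \<in> W" unfolding is_subspace_def by auto
lemma subspace_smult: "is_subspace d W \<Longrightarrow> u \<in> W \<Longrightarrow> c \<cdot>\<^sub>v u \<in> W" unfolding is_subspace_def by auto
lemma subspace_carr: "is_subspace d W \<Longrightarrow> u \<in> W \<Longrightarrow> u \<in> carrier_vec d" unfolding is_subspace_def by auto
lemma subspace_minus: assumes "is_subspace d W" "u \<in> W" "v \<in> W" shows "u - v \<in> W"
proof -
  have "u - v = u + (-1) \<cdot>\<^sub>v v" using subspace_carr[OF assms(1,2)] subspace_carr[OF assms(1,3)] by auto
  then show ?thesis using assms subspace_add subspace_smult by metis
qed

section \<open>Adjoint\<close>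

lemma adj_carrier[simp]: "A \<in> carrier_mat n k \<Longrightarrow> adj A \<in> carrier_mat k n"
  unfolding adj_def by auto
lemma adj_dims[simp]: "dim_row (adj A) = dim_col A" "dim_col (adj A) = dim_row A"
  unfolding adj_def by auto
lemma adj_index[simp]: "i < dim_col A \<Longrightarrow> j < dim_row A \<Longrightarrow> adj A $$ (i,j) = cnj (A $$ (j,i))"
  unfolding adj_def by auto
lemma adj_adj[simp]: "adj (adj A) = A"
  by (rule eq_matI) auto
lemma adj_mult: assumes "A \<in> carrier_mat n k" "B \<in> carrier_mat k l"
  shows "adj (A * B) = adj B * adj A"
  using assms by (intro eq_matI) (auto simp: scalar_prod_def row_def col_def intro!: sum.cong)
lemma adj_one[simp]: "adj (1\<^sub>m n) = 1\<^sub>m n"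
  by (rule eq_matI) auto



definition isom :: "nat \<Rightarrow> nat \<Rightarrow> complex mat \<Rightarrow> bool" where
  "isom d k \<Phi> \<longleftrightarrow> \<Phi> \<in> carrier_mat d k \<and> adj \<Phi> * \<Phi> = 1\<^sub>m k"

lemma adj_mult_index:
  assumes "\<Phi> \<in> carrier_mat d k" "\<Psi> \<in> carrier_mat d l" "j < k" "h < l"
  shows "(adj \<Phi> * \<Psi>) $$ (j,h) = (\<Sum>i<d. cnj (\<Phi> $$ (i,j)) * \<Psi> $$ (i,h))"
  using assms by (auto simp: scalar_prod_def row_def col_def atLeast0LessThan intro!: sum.cong)

lemma isom_width: assumes "isom d k \<Phi>" shows "k \<le> d"
proof (rule ccontr)
  assume "\<not> k \<le> d"
  hence kd: "d < k" by auto
  have P: "\<Phi> \<in> carrier_mat d k" and PP: "adj \<Phi> * \<Phi> = 1\<^sub>m k" using assms unfolding isom_def by auto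
  define \<Psi> where "\<Psi> = mat k k (\<lambda>(i,j). if i < d then \<Phi> $$ (i,j) else 0)"
  have Pc: "\<Psi> \<in> carrier_mat k k" unfolding \<Psi>_def by auto
  have "adj \<Psi> * \<Psi> = 1\<^sub>m k"
  proof (rule eq_matI)
    fix j h assume j: "j < dim_row (1\<^sub>m k)" and h: "h < dim_col (1\<^sub>m k)"
    have "(adj \<Psi> * \<Psi>) $$ (j,h) = (\<Sum>i<k. cnj (\<Psi> $$ (i,j)) * \<Psi> $$ (i,h))"
      using adj_mult_index[OF Pc Pc] j h by auto
    also have "\<dots> = (\<Sum>i<d. cnj (\<Phi> $$ (i,j)) * \<Phi> $$ (i,h))"
    proof -
      have "(\<Sum>i<k. cnj (\<Psi> $$ (i,j)) * \<Psi> $$ (i,h)) = (\<Sum>i<d. cnj (\<Psi> $$ (i,j)) * \<Psi> $$ (i,h))"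
        by (rule sum.mono_neutral_right) (use kd j h in \<open>auto simp: \<Psi>_def\<close>)
      also have "\<dots> = (\<Sum>i<d. cnj (\<Phi> $$ (i,j)) * \<Phi> $$ (i,h))"
        by (rule sum.cong) (use kd j h in \<open>auto simp: \<Psi>_def\<close>)
      finally show ?thesis .
    qed
    also have "\<dots> = (adj \<Phi> * \<Phi>) $$ (j,h)" using adj_mult_index[OF P P] j h by auto
    finally show "(adj \<Psi> * \<Psi>) $$ (j,h) = 1\<^sub>m k $$ (j,h)" using PP by simp
  qed (use Pc in auto)
  hence "\<Psi> * adj \<Psi> = 1\<^sub>m k" using mat_mult_left_right_inverse[of "adj \<Psi>" k \<Psi>] Pc by auto
  hence "(\<Psi> * adj \<Psi>) $$ (k-1,k-1) = 1" using kd by auto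
  moreover have "(\<Psi> * adj \<Psi>) $$ (k-1,k-1) = 0"
  proof -
    have "\<not> k - 1 < d" using kd by auto
    thus ?thesis using kd Pc by (auto simp: scalar_prod_def \<Psi>_def)
  qed
  ultimately show False by simp
qed

lemma adj_mult_vec_carrier[simp]: "A \<in> carrier_mat n k \<Longrightarrow> w \<in> carrier_vec n \<Longrightarrow> adj A *\<^sub>v w \<in> carrier_vec k"
  by (metis adj_carrier mult_mat_vec_carrier)

lemma zero_mult_vec: "y \<in> carrier_vec k \<Longrightarrow> 0\<^sub>m d k *\<^sub>v y = 0\<^sub>v d"
  by (auto simp: scalar_prod_def)

lemma cnj_mult_self: "cnj z * z = complex_of_real ((cmod z)\<^sup>2)"
  using complex_norm_square[of z] by (simp add: mult.commute)

lemma onb_exists: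
  assumes W: "is_subspace d W"
  shows "\<exists>k \<Phi>. isom d k \<Phi> \<and> (\<forall>y\<in>carrier_vec k. \<Phi> *\<^sub>v y \<in> W) \<and> (\<forall>w\<in>W. \<Phi> *\<^sub>v (adj \<Phi> *\<^sub>v w) = w)"
proof -
  define KK where "KK = {k. \<exists>\<Phi>. isom d k \<Phi> \<and> (\<forall>y\<in>carrier_vec k. \<Phi> *\<^sub>v y \<in> W)}"
  have "0 \<in> KK" unfolding KK_def
  proof (intro CollectI exI conjI ballI)
    show "isom d 0 (0\<^sub>m d 0)" unfolding isom_def by (auto intro!: eq_matI)
    fix y :: "complex vec" assume "y \<in> carrier_vec 0"
    thus "0\<^sub>m d 0 *\<^sub>v y \<in> W" using zero_mult_vec subspace_zero[OF W] by metis
  qed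
  moreover have bd: "KK \<subseteq> {..d}" unfolding KK_def using isom_width by auto
  hence fin: "finite KK" using finite_subset by blast
  define k where "k = Max KK"
  have "k \<in> KK" unfolding k_def using fin \<open>0 \<in> KK\<close> by (intro Max_in) auto
  then obtain \<Phi> where iso: "isom d k \<Phi>" and rng: "\<forall>y\<in>carrier_vec k. \<Phi> *\<^sub>v y \<in> W"
    unfolding KK_def by auto
  have P: "\<Phi> \<in> carrier_mat d k" and PP: "adj \<Phi> * \<Phi> = 1\<^sub>m k" using iso unfolding isom_def by auto
  have "\<forall>w\<in>W. \<Phi> *\<^sub>v (adj \<Phi> *\<^sub>v w) = w"
  proof (rule ccontr)
    assume "\<not> ?thesis"
    then obtain w where wW: "w \<in> W" and ne: "\<Phi> *\<^sub>v (adj \<Phi> *\<^sub>v w) \<noteq> w" by auto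
    have w: "w \<in> carrier_vec d" using subspace_carr[OF W wW] .
    define r where "r = w - \<Phi> *\<^sub>v (adj \<Phi> *\<^sub>v w)"
    have rc: "r \<in> carrier_vec d" unfolding r_def using w P by (metis adj_carrier minus_carrier_vec mult_mat_vec_carrier)
    have rW: "r \<in> W" unfolding r_def
      by (rule subspace_minus[OF W wW], rule rng[rule_format]) (use P w adj_carrier[OF P] in auto)
    have rne: "r \<noteq> 0\<^sub>v d"
    proof
      assume r0: "r = 0\<^sub>v d"
      have "\<Phi> *\<^sub>v (adj \<Phi> *\<^sub>v w) = w"
      proof (rule eq_vecI)
        fix i assume "i < dim_vec w"
        hence i: "i < d" using w by auto
        have "r $ i = w $ i - (\<Phi> *\<^sub>v (adj \<Phi> *\<^sub>v w)) $ i" unfolding r_def using i w P by simp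
        thus "(\<Phi> *\<^sub>v (adj \<Phi> *\<^sub>v w)) $ i = w $ i" using r0 i by simp
      qed (use w P in simp)
      thus False using ne by simp
    qed
    have ar: "adj \<Phi> *\<^sub>v r = 0\<^sub>v k"
    proof -
      have "adj \<Phi> *\<^sub>v r = adj \<Phi> *\<^sub>v w - adj \<Phi> *\<^sub>v (\<Phi> *\<^sub>v (adj \<Phi> *\<^sub>v w))"
        unfolding r_def using P w by (subst mult_minus_distrib_mat_vec) auto
      also have "adj \<Phi> *\<^sub>v (\<Phi> *\<^sub>v (adj \<Phi> *\<^sub>v w)) = adj \<Phi> *\<^sub>v w"
        using P w PP by (subst assoc_mult_mat_vec[symmetric]) auto
      finally show ?thesis using P w by auto
    qed
    define nr where "nr = (\<Sum>i<d. (cmod (r $ i))\<^sup>2)"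
    have "nr \<noteq> 0"
    proof
      assume "nr = 0"
      hence "\<forall>i\<in>{..<d}. (cmod (r $ i))\<^sup>2 = 0" unfolding nr_def by (subst sum_nonneg_eq_0_iff[symmetric]) auto
      hence "r = 0\<^sub>v d" using rc by (intro eq_vecI) auto
      thus False using rne by auto
    qed
    moreover have "nr \<ge> 0" unfolding nr_def by (auto intro: sum_nonneg)
    ultimately have nrp: "nr > 0" by auto
    define u where "u = complex_of_real (1 / sqrt nr) \<cdot>\<^sub>v r"
    have uc: "u \<in> carrier_vec d" unfolding u_def using rc by auto
    have uW: "u \<in> W" unfolding u_def using subspace_smult[OF W rW] .
    have au: "adj \<Phi> *\<^sub>v u = 0\<^sub>v k" unfolding u_def using ar P rc
      by (subst mult_mat_vec[of _ k d]) auto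
    have uu: "(\<Sum>i<d. cnj (u $ i) * u $ i) = 1"
    proof -
      have sq: "(complex_of_real (sqrt nr))\<^sup>2 = complex_of_real nr"
        using nrp by (metis of_real_power real_sqrt_pow2 less_imp_le)
      have "(\<Sum>i<d. cnj (u $ i) * u $ i) = (\<Sum>i<d. complex_of_real (1/nr) * (cnj (r $ i) * r $ i))"
        using rc nrp sq by (intro sum.cong) (auto simp: u_def power2_eq_square[symmetric] real_sqrt_pow2 )
      also have "\<dots> = complex_of_real (1/nr) * (\<Sum>i<d. cnj (r $ i) * r $ i)"
        by (simp add: sum_distrib_left)
      also have "(\<Sum>i<d. cnj (r $ i) * r $ i) = complex_of_real nr"
        by (simp only: nr_def of_real_sum cnj_mult_self)
      finally show ?thesis using nrp by simp
    qed
    define \<Phi>' where "\<Phi>' = mat d (Suc k) (\<lambda>(i,j). if j < k then \<Phi> $$ (i,j) else u $ i)"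
    have P': "\<Phi>' \<in> carrier_mat d (Suc k)" unfolding \<Phi>'_def by auto
    have "isom d (Suc k) \<Phi>'" unfolding isom_def
    proof (intro conjI P' eq_matI)
      fix j h assume j: "j < dim_row (1\<^sub>m (Suc k))" and h: "h < dim_col (1\<^sub>m (Suc k))"
      have e: "(adj \<Phi>' * \<Phi>') $$ (j,h) = (\<Sum>i<d. cnj (\<Phi>' $$ (i,j)) * \<Phi>' $$ (i,h))"
        using adj_mult_index[OF P' P'] j h by auto
      have c1: "(\<Sum>i<d. cnj (\<Phi> $$ (i,j')) * u $ i) = 0" if "j' < k" for j'
      proof -
        have "(adj \<Phi> *\<^sub>v u) $ j' = (\<Sum>i<d. cnj (\<Phi> $$ (i,j')) * u $ i)"
          using that P uc by (auto simp: scalar_prod_def atLeast0LessThan intro!: sum.cong)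
        thus ?thesis using au that by auto
      qed
      show "(adj \<Phi>' * \<Phi>') $$ (j,h) = 1\<^sub>m (Suc k) $$ (j,h)"
      proof (cases "j < k")
        case jk: True
        show ?thesis
        proof (cases "h < k")
          case True
          have "(\<Sum>i<d. cnj (\<Phi>' $$ (i,j)) * \<Phi>' $$ (i,h)) = (\<Sum>i<d. cnj (\<Phi> $$ (i,j)) * \<Phi> $$ (i,h))"
            using jk True by (intro sum.cong) (auto simp: \<Phi>'_def)
          also have "\<dots> = (adj \<Phi> * \<Phi>) $$ (j,h)" using adj_mult_index[OF P P] jk True by auto
          finally show ?thesis using e PP jk True by auto
        next
          case False
          hence hk: "h = k" using h by auto
          have "(\<Sum>i<d. cnj (\<Phi>' $$ (i,j)) * \<Phi>' $$ (i,h)) = (\<Sum>i<d. cnj (\<Phi> $$ (i,j)) * u $ i)"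
            using jk hk by (intro sum.cong) (auto simp: \<Phi>'_def)
          thus ?thesis using e c1[OF jk] jk hk by auto
        qed
      next
        case False
        hence jk: "j = k" using j by auto
        show ?thesis
        proof (cases "h < k")
          case True
          have "(\<Sum>i<d. cnj (\<Phi>' $$ (i,j)) * \<Phi>' $$ (i,h)) = cnj (\<Sum>i<d. cnj (\<Phi> $$ (i,h)) * u $ i)"
            using jk True by (subst cnj_sum) (auto simp: \<Phi>'_def mult.commute intro!: sum.cong)
          thus ?thesis using e c1[OF True] jk True by auto
        next
          case False
          hence hk: "h = k" using h by auto
          have "(\<Sum>i<d. cnj (\<Phi>' $$ (i,j)) * \<Phi>' $$ (i,h)) = (\<Sum>i<d. cnj (u $ i) * u $ i)"
            using jk hk by (intro sum.cong) (auto simp: \<Phi>'_def)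
          thus ?thesis using e uu jk hk by auto
        qed
      qed
    qed (use P' in auto)
    moreover have "\<forall>y\<in>carrier_vec (Suc k). \<Phi>' *\<^sub>v y \<in> W"
    proof
      fix y :: "complex vec" assume y: "y \<in> carrier_vec (Suc k)"
      define y' where "y' = vec k (\<lambda>j. y $ j)"
      have y'c: "y' \<in> carrier_vec k" unfolding y'_def by auto
      have "\<Phi>' *\<^sub>v y = \<Phi> *\<^sub>v y' + (y $ k) \<cdot>\<^sub>v u"
      proof (rule eq_vecI)
        fix i assume "i < dim_vec (\<Phi> *\<^sub>v y' + (y $ k) \<cdot>\<^sub>v u)"
        hence i: "i < d" using P uc by auto
        have "(\<Phi>' *\<^sub>v y) $ i = (\<Sum>j<Suc k. \<Phi>' $$ (i,j) * y $ j)"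
          using i y P' by (auto simp: scalar_prod_def atLeast0LessThan row_def mult.commute intro!: sum.cong)
        also have "\<dots> = (\<Sum>j<k. \<Phi> $$ (i,j) * y $ j) + u $ i * y $ k"
          using i by (simp add: \<Phi>'_def)
        also have "(\<Sum>j<k. \<Phi> $$ (i,j) * y $ j) = (\<Phi> *\<^sub>v y') $ i"
          using i P by (auto simp: scalar_prod_def atLeast0LessThan row_def y'_def mult.commute intro!: sum.cong)
        finally show "(\<Phi>' *\<^sub>v y) $ i = (\<Phi> *\<^sub>v y' + (y $ k) \<cdot>\<^sub>v u) $ i"
          using i P uc by (auto simp: mult.commute)
      qed (use P P' uc in auto)
      moreover have "\<Phi> *\<^sub>v y' \<in> W" using rng y'c by auto
      ultimately show "\<Phi>' *\<^sub>v y \<in> W" using subspace_add[OF W] subspace_smult[OF W uW] by metis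
    qed
    ultimately have "Suc k \<in> KK" unfolding KK_def by auto
    hence "Suc k \<le> k" unfolding k_def using fin by (intro Max_ge) auto
    thus False by auto
  qed
  thus ?thesis using iso rng by blast
qed



section \<open>Inner product\<close>

definition cip :: "complex vec \<Rightarrow> complex vec \<Rightarrow> complex" where
  "cip x y = (\<Sum>i<dim_vec x. x $ i * cnj (y $ i))"

lemma cip_adj: assumes A: "A \<in> carrier_mat n k" and x: "x \<in> carrier_vec n" and y: "y \<in> carrier_vec k"
  shows "cip x (A *\<^sub>v y) = cip (adj A *\<^sub>v x) y"
proof -
  have "cip x (A *\<^sub>v y) = (\<Sum>i<n. x $ i * cnj (\<Sum>l<k. A $$ (i,l) * y $ l))"
    unfolding cip_def using A x y by (intro sum.cong) (auto simp: scalar_prod_def atLeast0LessThan)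
  also have "\<dots> = (\<Sum>i<n. \<Sum>l<k. x $ i * cnj (A $$ (i,l)) * cnj (y $ l))"
    by (simp add: cnj_sum sum_distrib_left mult.assoc)
  also have "\<dots> = (\<Sum>l<k. \<Sum>i<n. x $ i * cnj (A $$ (i,l)) * cnj (y $ l))"
    by (rule sum.swap)
  also have "\<dots> = (\<Sum>l<k. (\<Sum>i<n. cnj (A $$ (i,l)) * x $ i) * cnj (y $ l))"
    by (rule sum.cong) (auto simp: sum_distrib_right sum_distrib_left mult_ac)
  also have "\<dots> = cip (adj A *\<^sub>v x) y"
    unfolding cip_def using A x y by (intro sum.cong) (auto simp: scalar_prod_def atLeast0LessThan)
  finally show ?thesis .
qed

lemma cip_adj2: assumes A: "A \<in> carrier_mat n k" and x: "x \<in> carrier_vec k" and y: "y \<in> carrier_vec n"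
  shows "cip (A *\<^sub>v x) y = cip x (adj A *\<^sub>v y)"
  using cip_adj[OF adj_carrier[OF A] x y] by simp

lemma cip_add: "x \<in> carrier_vec n \<Longrightarrow> y \<in> carrier_vec n \<Longrightarrow> cip (x + y) z = cip x z + cip y z"
  unfolding cip_def by (simp add: distrib_right sum.distrib)
lemma cip_smult: "cip (c \<cdot>\<^sub>v x) z = c * cip x z"
  unfolding cip_def by (simp add: sum_distrib_left mult.assoc)
lemma cip_zero: "cip (0\<^sub>v n) z = 0"
  unfolding cip_def by simp
lemma cip_self_zero: assumes x: "x \<in> carrier_vec n" and "cip x x = 0" shows "x = 0\<^sub>v n"
proof -
  have "(\<Sum>i<n. (cmod (x $ i))\<^sup>2) = 0"
  proof -
    have "complex_of_real (\<Sum>i<n. (cmod (x $ i))\<^sup>2) = cip x x"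
    proof -
      have e: "\<And>z. complex_of_real ((cmod z)\<^sup>2) = z * cnj z" by (metis complex_norm_square of_real_power)
      show ?thesis unfolding cip_def using x by (simp only: of_real_sum e) simp
    qed
    thus ?thesis using assms(2) of_real_eq_0_iff by metis
  qed
  hence "\<forall>i\<in>{..<n}. (cmod (x $ i))\<^sup>2 = 0" by (subst sum_nonneg_eq_0_iff[symmetric]) auto
  thus ?thesis using x by (intro eq_vecI) auto
qed

section \<open>Matrices determined by action on vectors\<close>

lemma mat_unit_vec: fixes A :: "complex mat" assumes "A \<in> carrier_mat n k" "j < k" "i < n"
  shows "(A *\<^sub>v unit_vec k j) $ i = A $$ (i,j)"
proof -
  have e: "\<And>ia. A $$ (i, ia) * (if ia = j then 1 else 0) = (if ia = j then A $$ (i,ia) else 0)" by simp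
  have "(A *\<^sub>v unit_vec k j) $ i = (\<Sum>ia\<in>{0..<k}. if ia = j then A $$ (i,ia) else 0)"
    using assms by (auto simp: scalar_prod_def unit_vec_def row_def e)
  thus ?thesis using assms by simp
qed

lemma mat_eq_vec: fixes A B :: "complex mat" assumes A: "A \<in> carrier_mat n k" and B: "B \<in> carrier_mat n k"
  and eq: "\<And>y. y \<in> carrier_vec k \<Longrightarrow> A *\<^sub>v y = B *\<^sub>v y"
  shows "A = B"
proof (rule eq_matI)
  fix i j assume "i < dim_row B" "j < dim_col B"
  hence i: "i < n" and j: "j < k" using B by auto
  show "A $$ (i,j) = B $$ (i,j)"
    using mat_unit_vec[OF A j i] mat_unit_vec[OF B j i] eq[of "unit_vec k j"] by simp
qed (use A B in auto)

lemma preimage_subspace: assumes A: "A \<in> carrier_mat n d" and W: "is_subspace n W"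
  shows "is_subspace d {x \<in> carrier_vec d. A *\<^sub>v x \<in> W}"
  unfolding is_subspace_def
proof (intro conjI ballI allI)
  have "A *\<^sub>v 0\<^sub>v d = 0\<^sub>v n" using A by (intro eq_vecI) (auto simp: scalar_prod_def)
  thus "0\<^sub>v d \<in> {x \<in> carrier_vec d. A *\<^sub>v x \<in> W}" using A subspace_zero[OF W] by auto
  fix u v assume u: "u \<in> {x \<in> carrier_vec d. A *\<^sub>v x \<in> W}" and v: "v \<in> {x \<in> carrier_vec d. A *\<^sub>v x \<in> W}"
  have "A *\<^sub>v (u + v) = A *\<^sub>v u + A *\<^sub>v v" using u v A by (auto intro: mult_add_distrib_mat_vec)
  thus "u + v \<in> {x \<in> carrier_vec d. A *\<^sub>v x \<in> W}" using u v subspace_add[OF W] by auto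
next
  fix c u assume u: "u \<in> {x \<in> carrier_vec d. A *\<^sub>v x \<in> W}"
  have "A *\<^sub>v (c \<cdot>\<^sub>v u) = c \<cdot>\<^sub>v (A *\<^sub>v u)" using u A by (auto intro: mult_mat_vec)
  thus "c \<cdot>\<^sub>v u \<in> {x \<in> carrier_vec d. A *\<^sub>v x \<in> W}" using u subspace_smult[OF W] by auto
qed auto

lemma span_in_mono: assumes "S1 \<subseteq> span_in d S2" "S2 \<subseteq> carrier_vec d"
  shows "span_in d S1 \<subseteq> span_in d S2"
  using span_in_min[OF span_in_subspace[OF assms(2)] assms(1)] .

lemma span_in_invariant:
  assumes x: "x \<in> span_in d S" and S: "S \<subseteq> carrier_vec d" and A: "A \<in> carrier_mat d d"
    and inv: "\<And>x. x \<in> S \<Longrightarrow> A *\<^sub>v x \<in> span_in d S"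
  shows "A *\<^sub>v x \<in> span_in d S"
proof -
  have "span_in d S \<subseteq> {x \<in> carrier_vec d. A *\<^sub>v x \<in> span_in d S}"
    by (rule span_in_min[OF preimage_subspace[OF A span_in_subspace[OF S]]]) (use S inv in auto)
  thus ?thesis using x by auto
qed

section \<open>Unitary representations\<close>

lemma rep_carrier: "unitary_rep G d \<rho> \<Longrightarrow> g \<in> carrier G \<Longrightarrow> \<rho> g \<in> carrier_mat d d"
  unfolding unitary_rep_def unitary_mat_def by auto

lemma rep_one: assumes G: "group G" and r: "unitary_rep G d \<rho>" shows "\<rho> \<one>\<^bsub>G\<^esub> = 1\<^sub>m d"
proof -
  have o: "\<one>\<^bsub>G\<^esub> \<in> carrier G" using G by (simp add: group.is_monoid monoid.one_closed)
  have c: "\<rho> \<one>\<^bsub>G\<^esub> \<in> carrier_mat d d" using rep_carrier[OF r o] .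
  have u: "adj (\<rho> \<one>\<^bsub>G\<^esub>) * \<rho> \<one>\<^bsub>G\<^esub> = 1\<^sub>m d" using r o unfolding unitary_rep_def unitary_mat_def by auto
  have h: "\<rho> \<one>\<^bsub>G\<^esub> = \<rho> \<one>\<^bsub>G\<^esub> * \<rho> \<one>\<^bsub>G\<^esub>" using r o G unfolding unitary_rep_def
    by (metis group.is_monoid monoid.l_one)
  have "\<rho> \<one>\<^bsub>G\<^esub> = adj (\<rho> \<one>\<^bsub>G\<^esub>) * \<rho> \<one>\<^bsub>G\<^esub> * \<rho> \<one>\<^bsub>G\<^esub>" using u c by simp
  also have "\<dots> = adj (\<rho> \<one>\<^bsub>G\<^esub>) * (\<rho> \<one>\<^bsub>G\<^esub> * \<rho> \<one>\<^bsub>G\<^esub>)" using c by (simp add: assoc_mult_mat[of _ d d _ d _ d])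
  also have "\<dots> = 1\<^sub>m d" using h u by simp
  finally show ?thesis .
qed

lemma rep_inv: assumes G: "group G" and r: "unitary_rep G d \<rho>" and g: "g \<in> carrier G"
  shows "\<rho> (inv\<^bsub>G\<^esub> g) = adj (\<rho> g)"
proof -
  have ig: "inv\<^bsub>G\<^esub> g \<in> carrier G" using G g by (simp add: group.inv_closed)
  have c: "\<rho> g \<in> carrier_mat d d" "\<rho> (inv\<^bsub>G\<^esub> g) \<in> carrier_mat d d" using rep_carrier[OF r] g ig by auto
  have u: "adj (\<rho> g) * \<rho> g = 1\<^sub>m d" using r g unfolding unitary_rep_def unitary_mat_def by auto
  have h: "\<rho> g * \<rho> (inv\<^bsub>G\<^esub> g) = 1\<^sub>m d" using r g ig G rep_one[OF G r] unfolding unitary_rep_def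
    by (metis group.r_inv)
  have "\<rho> (inv\<^bsub>G\<^esub> g) = adj (\<rho> g) * \<rho> g * \<rho> (inv\<^bsub>G\<^esub> g)" using u c by simp
  also have "\<dots> = adj (\<rho> g) * (\<rho> g * \<rho> (inv\<^bsub>G\<^esub> g))" using c by (simp add: assoc_mult_mat[of _ d d _ d _ d])
  also have "\<dots> = adj (\<rho> g)" using h c by simp
  finally show ?thesis .
qed



lemma mult_vec_dim0: assumes "\<Phi> \<in> carrier_mat m 0" "y \<in> carrier_vec 0" shows "\<Phi> *\<^sub>v y = 0\<^sub>v m"
  using assms by (intro eq_vecI) (auto simp: scalar_prod_def)

lemma isom_range_zero:
  assumes "isom m 0 \<Phi>" "\<forall>w\<in>W. \<Phi> *\<^sub>v (adj \<Phi> *\<^sub>v w) = w" "W \<subseteq> carrier_vec m"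
  shows "W \<subseteq> {0\<^sub>v m}"
proof
  fix w assume w: "w \<in> W"
  have P: "\<Phi> \<in> carrier_mat m 0" using assms(1) unfolding isom_def by auto
  have "adj \<Phi> *\<^sub>v w \<in> carrier_vec 0" using P w assms(3) by auto
  hence "\<Phi> *\<^sub>v (adj \<Phi> *\<^sub>v w) = 0\<^sub>v m" using mult_vec_dim0[OF P] by auto
  thus "w \<in> {0\<^sub>v m}" using assms(2) w by auto
qed

lemma minimal_irrep:
  assumes G: "group G" and r: "unitary_rep G m \<rho>" and V: "is_subspace m V"
    and P: "isom m k \<Phi>" and k0: "0 < k" and rngV: "\<forall>y\<in>carrier_vec k. \<Phi> *\<^sub>v y \<in> V"
    and inv: "\<forall>g\<in>carrier G. \<forall>y\<in>carrier_vec k. \<exists>z\<in>carrier_vec k. \<rho> g *\<^sub>v (\<Phi> *\<^sub>v y) = \<Phi> *\<^sub>v z"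
    and minimal: "\<And>j \<Psi>. 0 < j \<Longrightarrow> j < k \<Longrightarrow> isom m j \<Psi> \<Longrightarrow> \<forall>y\<in>carrier_vec j. \<Psi> *\<^sub>v y \<in> V \<Longrightarrow>
        \<forall>g\<in>carrier G. \<forall>y\<in>carrier_vec j. \<exists>z\<in>carrier_vec j. \<rho> g *\<^sub>v (\<Psi> *\<^sub>v y) = \<Psi> *\<^sub>v z \<Longrightarrow> False"
  shows "(k, \<lambda>g. adj \<Phi> * \<rho> g * \<Phi>) \<in> irreps G \<and> (\<forall>g\<in>carrier G. \<rho> g * \<Phi> = \<Phi> * (adj \<Phi> * \<rho> g * \<Phi>))"
proof -
  define \<sigma> where "\<sigma> = (\<lambda>g. adj \<Phi> * \<rho> g * \<Phi>)"
  have Pc: "\<Phi> \<in> carrier_mat m k" and PP: "adj \<Phi> * \<Phi> = 1\<^sub>m k" using P unfolding isom_def by auto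
  have aPc: "adj \<Phi> \<in> carrier_mat k m" using Pc by simp
  have rc: "\<And>g. g \<in> carrier G \<Longrightarrow> \<rho> g \<in> carrier_mat m m" using rep_carrier[OF r] .
  have sc: "\<And>g. g \<in> carrier G \<Longrightarrow> \<sigma> g \<in> carrier_mat k k" unfolding \<sigma>_def using rc Pc aPc by (meson mult_carrier_mat)
  have sv: "\<sigma> g *\<^sub>v y = adj \<Phi> *\<^sub>v (\<rho> g *\<^sub>v (\<Phi> *\<^sub>v y))" if g: "g \<in> carrier G" and y: "y \<in> carrier_vec k" for g y
  proof -
    have "\<sigma> g *\<^sub>v y = (adj \<Phi> * \<rho> g) *\<^sub>v (\<Phi> *\<^sub>v y)" unfolding \<sigma>_def
      using rc[OF g] aPc Pc y by (subst assoc_mult_mat_vec) auto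
    also have "\<dots> = adj \<Phi> *\<^sub>v (\<rho> g *\<^sub>v (\<Phi> *\<^sub>v y))"
      using rc[OF g] aPc Pc y by (subst assoc_mult_mat_vec) auto
    finally show ?thesis .
  qed
  have PaP: "\<Phi> *\<^sub>v (adj \<Phi> *\<^sub>v (\<Phi> *\<^sub>v z)) = \<Phi> *\<^sub>v z" if z: "z \<in> carrier_vec k" for z
  proof -
    have "adj \<Phi> *\<^sub>v (\<Phi> *\<^sub>v z) = (adj \<Phi> * \<Phi>) *\<^sub>v z" using aPc Pc z by (subst assoc_mult_mat_vec) auto
    thus ?thesis using PP z by simp
  qed
  have key: "\<Phi> *\<^sub>v (\<sigma> g *\<^sub>v y) = \<rho> g *\<^sub>v (\<Phi> *\<^sub>v y)" if g: "g \<in> carrier G" and y: "y \<in> carrier_vec k" for g y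
  proof -
    obtain z where z: "z \<in> carrier_vec k" and e: "\<rho> g *\<^sub>v (\<Phi> *\<^sub>v y) = \<Phi> *\<^sub>v z" using inv g y by blast
    show ?thesis unfolding sv[OF g y] e using PaP[OF z] .
  qed
  have inter: "\<rho> g * \<Phi> = \<Phi> * \<sigma> g" if g: "g \<in> carrier G" for g
  proof (rule mat_eq_vec)
    show "\<rho> g * \<Phi> \<in> carrier_mat m k" using rc[OF g] Pc by auto
    show "\<Phi> * \<sigma> g \<in> carrier_mat m k" using sc[OF g] Pc by auto
    fix y :: "complex vec" assume y: "y \<in> carrier_vec k"
    show "(\<rho> g * \<Phi>) *\<^sub>v y = (\<Phi> * \<sigma> g) *\<^sub>v y"
      using key[OF g y] rc[OF g] Pc sc[OF g] y by (simp add: assoc_mult_mat_vec)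
  qed
  have hom: "\<sigma> (g \<otimes>\<^bsub>G\<^esub> h) = \<sigma> g * \<sigma> h" if g: "g \<in> carrier G" and h: "h \<in> carrier G" for g h
  proof (rule mat_eq_vec)
    have gh: "g \<otimes>\<^bsub>G\<^esub> h \<in> carrier G" using G g h by (simp add: group.is_monoid monoid.m_closed)
    show "\<sigma> (g \<otimes>\<^bsub>G\<^esub> h) \<in> carrier_mat k k" using sc[OF gh] .
    show "\<sigma> g * \<sigma> h \<in> carrier_mat k k" using sc[OF g] sc[OF h] by auto
    fix y :: "complex vec" assume y: "y \<in> carrier_vec k"
    have "\<sigma> (g \<otimes>\<^bsub>G\<^esub> h) *\<^sub>v y = adj \<Phi> *\<^sub>v ((\<rho> g * \<rho> h) *\<^sub>v (\<Phi> *\<^sub>v y))"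
      using sv[OF gh y] r g h unfolding unitary_rep_def by auto
    also have "\<dots> = adj \<Phi> *\<^sub>v (\<rho> g *\<^sub>v (\<rho> h *\<^sub>v (\<Phi> *\<^sub>v y)))"
      using rc[OF g] rc[OF h] Pc y by (subst assoc_mult_mat_vec) auto
    also have "\<dots> = adj \<Phi> *\<^sub>v (\<rho> g *\<^sub>v (\<Phi> *\<^sub>v (\<sigma> h *\<^sub>v y)))" using key[OF h y] by simp
    also have "\<dots> = \<sigma> g *\<^sub>v (\<sigma> h *\<^sub>v y)" using sv[OF g] sc[OF h] y by auto
    also have "\<dots> = (\<sigma> g * \<sigma> h) *\<^sub>v y" using sc[OF g] sc[OF h] y by (simp add: assoc_mult_mat_vec)
    finally show "\<sigma> (g \<otimes>\<^bsub>G\<^esub> h) *\<^sub>v y = (\<sigma> g * \<sigma> h) *\<^sub>v y" .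
  qed
  have s1: "\<sigma> \<one>\<^bsub>G\<^esub> = 1\<^sub>m k" unfolding \<sigma>_def rep_one[OF G r] using aPc Pc PP by simp
  have sadj: "adj (\<sigma> g) = \<sigma> (inv\<^bsub>G\<^esub> g)" if g: "g \<in> carrier G" for g
  proof -
    have "adj (\<sigma> g) = adj \<Phi> * adj (adj \<Phi> * \<rho> g)" unfolding \<sigma>_def
      by (rule adj_mult[of _ k m]) (use aPc rc[OF g] Pc in auto)
    also have "adj (adj \<Phi> * \<rho> g) = adj (\<rho> g) * \<Phi>" using adj_mult[OF aPc rc[OF g]] by simp
    also have "adj \<Phi> * (adj (\<rho> g) * \<Phi>) = adj \<Phi> * adj (\<rho> g) * \<Phi>"
      using aPc rc[OF g] Pc by (subst assoc_mult_mat[of _ k m _ m _ k]) auto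
    finally show ?thesis unfolding \<sigma>_def rep_inv[OF G r g] .
  qed
  have unit: "unitary_mat k (\<sigma> g)" if g: "g \<in> carrier G" for g
  proof -
    have ig: "inv\<^bsub>G\<^esub> g \<in> carrier G" using G g by (simp add: group.inv_closed)
    have "\<sigma> g * adj (\<sigma> g) = 1\<^sub>m k" unfolding sadj[OF g] hom[OF g ig, symmetric]
      using G g s1 by (simp add: group.r_inv)
    moreover have "adj (\<sigma> g) * \<sigma> g = 1\<^sub>m k" unfolding sadj[OF g] hom[OF ig g, symmetric]
      using G g s1 by (simp add: group.l_inv)
    ultimately show ?thesis unfolding unitary_mat_def using sc[OF g] by auto
  qed
  have urep: "unitary_rep G k \<sigma>" unfolding unitary_rep_def using unit hom by auto
  have irr: "W' = {0\<^sub>v k} \<or> W' = carrier_vec k"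
    if W': "is_subspace k W'" and Winv: "\<forall>g\<in>carrier G. \<forall>v\<in>W'. \<sigma> g *\<^sub>v v \<in> W'" for W'
  proof (rule ccontr)
    assume nt: "\<not> (W' = {0\<^sub>v k} \<or> W' = carrier_vec k)"
    obtain j \<Psi> where Q: "isom k j \<Psi>" and rngW: "\<forall>y\<in>carrier_vec j. \<Psi> *\<^sub>v y \<in> W'"
      and proj: "\<forall>w\<in>W'. \<Psi> *\<^sub>v (adj \<Psi> *\<^sub>v w) = w" using onb_exists[OF W'] by blast
    have Qc: "\<Psi> \<in> carrier_mat k j" and QQ: "adj \<Psi> * \<Psi> = 1\<^sub>m j" using Q unfolding isom_def by auto
    have Wc: "W' \<subseteq> carrier_vec k" using W' unfolding is_subspace_def by auto
    have j0: "0 < j"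
    proof (rule ccontr)
      assume "\<not> 0 < j"
      hence "j = 0" by auto
      hence "W' \<subseteq> {0\<^sub>v k}" using isom_range_zero[of k \<Psi> W'] Q proj Wc by auto
      thus False using nt subspace_zero[OF W'] by auto
    qed
    have jk: "j < k"
    proof -
      have "j \<le> k" using isom_width[OF Q] .
      moreover have "j \<noteq> k"
      proof
        assume jk: "j = k"
        have "\<Psi> * adj \<Psi> = 1\<^sub>m k" using mat_mult_left_right_inverse[of "adj \<Psi>" k \<Psi>] Qc QQ jk by auto
        have "carrier_vec k \<subseteq> W'"
        proof
          fix y :: "complex vec" assume y: "y \<in> carrier_vec k"
          have "y = (\<Psi> * adj \<Psi>) *\<^sub>v y" using \<open>\<Psi> * adj \<Psi> = 1\<^sub>m k\<close> y by simp
          also have "\<dots> = \<Psi> *\<^sub>v (adj \<Psi> *\<^sub>v y)" using Qc y jk by (subst assoc_mult_mat_vec) auto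
          finally show "y \<in> W'" using rngW Qc y jk by (metis adj_mult_vec_carrier)
        qed
        thus False using nt Wc by auto
      qed
      ultimately show ?thesis by auto
    qed
    define \<Psi>' where "\<Psi>' = \<Phi> * \<Psi>"
    have Q'c: "\<Psi>' \<in> carrier_mat m j" unfolding \<Psi>'_def using Pc Qc by auto
    have "adj \<Psi>' * \<Psi>' = 1\<^sub>m j"
    proof -
      have "adj \<Psi>' * \<Psi>' = (adj \<Psi> * adj \<Phi>) * (\<Phi> * \<Psi>)" unfolding \<Psi>'_def using adj_mult[OF Pc Qc] by simp
      also have "\<dots> = adj \<Psi> * ((adj \<Phi> * \<Phi>) * \<Psi>)"
        using Pc Qc by (simp add: assoc_mult_mat[of _ j k _ m _ j] assoc_mult_mat[of _ k m _ k _ j])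
      also have "\<dots> = 1\<^sub>m j" using PP QQ Qc by simp
      finally show ?thesis .
    qed
    hence Q': "isom m j \<Psi>'" unfolding isom_def using Q'c by auto
    have rng': "\<forall>y\<in>carrier_vec j. \<Psi>' *\<^sub>v y \<in> V"
      unfolding \<Psi>'_def using rngV Pc Qc by (simp add: assoc_mult_mat_vec)
    have inv': "\<forall>g\<in>carrier G. \<forall>y\<in>carrier_vec j. \<exists>z\<in>carrier_vec j. \<rho> g *\<^sub>v (\<Psi>' *\<^sub>v y) = \<Psi>' *\<^sub>v z"
    proof (intro ballI)
      fix g and y :: "complex vec" assume g: "g \<in> carrier G" and y: "y \<in> carrier_vec j"
      have Qy: "\<Psi> *\<^sub>v y \<in> W'" using rngW y by auto
      have Qyc: "\<Psi> *\<^sub>v y \<in> carrier_vec k" using Qc y by auto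
      have sW: "\<sigma> g *\<^sub>v (\<Psi> *\<^sub>v y) \<in> W'" using Winv g Qy by auto
      define z where "z = adj \<Psi> *\<^sub>v (\<sigma> g *\<^sub>v (\<Psi> *\<^sub>v y))"
      have zc: "z \<in> carrier_vec j" unfolding z_def using Qc sc[OF g] Qyc by auto
      have "\<rho> g *\<^sub>v (\<Psi>' *\<^sub>v y) = \<rho> g *\<^sub>v (\<Phi> *\<^sub>v (\<Psi> *\<^sub>v y))" unfolding \<Psi>'_def using Pc Qc y by simp
      also have "\<dots> = \<Phi> *\<^sub>v (\<sigma> g *\<^sub>v (\<Psi> *\<^sub>v y))" using key[OF g Qyc] by simp
      also have "\<dots> = \<Phi> *\<^sub>v (\<Psi> *\<^sub>v z)" unfolding z_def using proj sW by simp
      also have "\<dots> = \<Psi>' *\<^sub>v z" unfolding \<Psi>'_def using Pc Qc zc by simp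
      finally show "\<exists>z\<in>carrier_vec j. \<rho> g *\<^sub>v (\<Psi>' *\<^sub>v y) = \<Psi>' *\<^sub>v z" using zc by blast
    qed
    show False using minimal[OF j0 jk Q' rng' inv'] .
  qed
  have "irreducible_rep G k \<sigma>" unfolding irreducible_rep_def using urep k0 irr by auto
  hence "(k, \<sigma>) \<in> irreps G" unfolding irreps_def by auto
  thus ?thesis using inter unfolding \<sigma>_def by auto
qed



lemma iso_carrier: "isotypic G m \<rho> lam \<subseteq> carrier_vec m"
  unfolding isotypic_def by (rule span_in_carrier) auto

lemma iso_gen: assumes "\<Phi> \<in> carrier_mat m (fst lam)" "v \<in> carrier_vec (fst lam)"
    "\<forall>g\<in>carrier G. \<rho> g * \<Phi> = \<Phi> * snd lam g"
  shows "\<Phi> *\<^sub>v v \<in> isotypic G m \<rho> lam"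
  unfolding isotypic_def using assms by (intro subsetD[OF span_in_inc]) blast

lemma irreps_rep: "lam \<in> irreps G \<Longrightarrow> unitary_rep G (fst lam) (snd lam)"
  unfolding irreps_def irreducible_rep_def by auto

lemma iso_inv: assumes r: "unitary_rep G m \<rho>" and lam: "lam \<in> irreps G" and g: "g \<in> carrier G"
  and x: "x \<in> isotypic G m \<rho> lam"
  shows "\<rho> g *\<^sub>v x \<in> isotypic G m \<rho> lam"
proof -
  have sc: "snd lam g \<in> carrier_mat (fst lam) (fst lam)" using rep_carrier[OF irreps_rep[OF lam] g] .
  show ?thesis using x unfolding isotypic_def
  proof (rule span_in_invariant)
    show "{\<Phi> *\<^sub>v v |\<Phi> v. \<Phi> \<in> carrier_mat m (fst lam) \<and> v \<in> carrier_vec (fst lam) \<and> (\<forall>g\<in>carrier G. \<rho> g * \<Phi> = \<Phi> * snd lam g)} \<subseteq> carrier_vec m"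
      by auto
    show "\<rho> g \<in> carrier_mat m m" using rep_carrier[OF r g] .
    fix y assume "y \<in> {\<Phi> *\<^sub>v v |\<Phi> v. \<Phi> \<in> carrier_mat m (fst lam) \<and> v \<in> carrier_vec (fst lam) \<and> (\<forall>g\<in>carrier G. \<rho> g * \<Phi> = \<Phi> * snd lam g)}"
    then obtain \<Phi> v where y: "y = \<Phi> *\<^sub>v v" and P: "\<Phi> \<in> carrier_mat m (fst lam)" and v: "v \<in> carrier_vec (fst lam)"
      and i: "\<forall>g\<in>carrier G. \<rho> g * \<Phi> = \<Phi> * snd lam g" by blast
    have "\<rho> g *\<^sub>v y = (\<rho> g * \<Phi>) *\<^sub>v v" unfolding y using rep_carrier[OF r g] P v by (simp add: assoc_mult_mat_vec)
    also have "\<dots> = \<Phi> *\<^sub>v (snd lam g *\<^sub>v v)" using i g P v sc by (simp add: assoc_mult_mat_vec)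
    finally have "\<rho> g *\<^sub>v y = \<Phi> *\<^sub>v (snd lam g *\<^sub>v v)" .
    moreover have "snd lam g *\<^sub>v v \<in> carrier_vec (fst lam)" using sc v by auto
    ultimately show "\<rho> g *\<^sub>v y \<in> span_in m {\<Phi> *\<^sub>v v |\<Phi> v. \<Phi> \<in> carrier_mat m (fst lam) \<and> v \<in> carrier_vec (fst lam) \<and> (\<forall>g\<in>carrier G. \<rho> g * \<Phi> = \<Phi> * snd lam g)}"
      using P i by (intro subsetD[OF span_in_inc]) blast
  qed
qed

lemma decomp:
  assumes G: "group G" and r: "unitary_rep G m \<rho>"
  shows "carrier_vec m \<subseteq> span_in m (\<Union>lam\<in>irreps G. isotypic G m \<rho> lam)"
proof
  define U where "U = (\<Union>lam\<in>irreps G. isotypic G m \<rho> lam)"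
  define S where "S = span_in m U"
  have Uc: "U \<subseteq> carrier_vec m" unfolding U_def using iso_carrier by blast
  have Ssub: "is_subspace m S" unfolding S_def using span_in_subspace[OF Uc] .
  have rc: "\<And>g. g \<in> carrier G \<Longrightarrow> \<rho> g \<in> carrier_mat m m" using rep_carrier[OF r] .
  have Sinv: "\<rho> g *\<^sub>v x \<in> S" if g: "g \<in> carrier G" and x: "x \<in> S" for g x
    using x unfolding S_def
  proof (rule span_in_invariant[OF _ Uc rc[OF g]])
    fix y assume "y \<in> U"
    then obtain lam where lam: "lam \<in> irreps G" and y: "y \<in> isotypic G m \<rho> lam" unfolding U_def by blast
    have "\<rho> g *\<^sub>v y \<in> U" using iso_inv[OF r lam g y] lam unfolding U_def by blast
    thus "\<rho> g *\<^sub>v y \<in> span_in m U" using span_in_inc by blast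
  qed
  define Sp where "Sp = {x \<in> carrier_vec m. \<forall>s\<in>S. cip x s = 0}"
  have Spsub: "is_subspace m Sp" unfolding is_subspace_def Sp_def
    by (auto simp: cip_add cip_smult cip_zero)
  have Spinv: "\<rho> g *\<^sub>v x \<in> Sp" if g: "g \<in> carrier G" and x: "x \<in> Sp" for g x
  proof -
    have xc: "x \<in> carrier_vec m" using x unfolding Sp_def by auto
    have ig: "inv\<^bsub>G\<^esub> g \<in> carrier G" using G g by (simp add: group.inv_closed)
    { fix s assume s: "s \<in> S"
      have sc: "s \<in> carrier_vec m" using subspace_carr[OF Ssub s] .
      have "cip (\<rho> g *\<^sub>v x) s = cip x (adj (\<rho> g) *\<^sub>v s)" using cip_adj2[OF rc[OF g] xc sc] .
      also have "adj (\<rho> g) *\<^sub>v s = \<rho> (inv\<^bsub>G\<^esub> g) *\<^sub>v s" using rep_inv[OF G r g] by simp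
      also have "cip x (\<rho> (inv\<^bsub>G\<^esub> g) *\<^sub>v s) = 0" using x Sinv[OF ig s] unfolding Sp_def by auto
      finally have "cip (\<rho> g *\<^sub>v x) s = 0" . }
    thus ?thesis unfolding Sp_def using rc[OF g] xc by auto
  qed
  fix x :: "complex vec" assume x: "x \<in> carrier_vec m"
  show "x \<in> span_in m U"
  proof (rule ccontr)
    assume xS: "x \<notin> span_in m U"
    obtain kS \<Phi>S where PS: "isom m kS \<Phi>S" and rngS: "\<forall>y\<in>carrier_vec kS. \<Phi>S *\<^sub>v y \<in> S"
      and projS: "\<forall>w\<in>S. \<Phi>S *\<^sub>v (adj \<Phi>S *\<^sub>v w) = w" using onb_exists[OF Ssub] by blast
    have PSc: "\<Phi>S \<in> carrier_mat m kS" and PPS: "adj \<Phi>S * \<Phi>S = 1\<^sub>m kS" using PS unfolding isom_def by auto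
    define r where "r = x - \<Phi>S *\<^sub>v (adj \<Phi>S *\<^sub>v x)"
    have rcv: "r \<in> carrier_vec m" unfolding r_def using x PSc by (metis adj_mult_vec_carrier minus_carrier_vec mult_mat_vec_carrier)
    have ar: "adj \<Phi>S *\<^sub>v r = 0\<^sub>v kS"
    proof -
      have "adj \<Phi>S *\<^sub>v r = adj \<Phi>S *\<^sub>v x - adj \<Phi>S *\<^sub>v (\<Phi>S *\<^sub>v (adj \<Phi>S *\<^sub>v x))"
        unfolding r_def using PSc x by (subst mult_minus_distrib_mat_vec) auto
      also have "adj \<Phi>S *\<^sub>v (\<Phi>S *\<^sub>v (adj \<Phi>S *\<^sub>v x)) = adj \<Phi>S *\<^sub>v x"
        using PSc x PPS by (subst assoc_mult_mat_vec[symmetric]) auto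
      finally show ?thesis using PSc x by auto
    qed
    have rSp: "r \<in> Sp" unfolding Sp_def
    proof (intro CollectI conjI ballI rcv)
      fix s assume s: "s \<in> S"
      have "cip r s = cip r (\<Phi>S *\<^sub>v (adj \<Phi>S *\<^sub>v s))" using projS s by simp
      also have "\<dots> = cip (adj \<Phi>S *\<^sub>v r) (adj \<Phi>S *\<^sub>v s)"
        using cip_adj[OF PSc rcv] PSc subspace_carr[OF Ssub s] by auto
      also have "\<dots> = 0" using ar cip_zero by simp
      finally show "cip r s = 0" .
    qed
    have rne: "r \<noteq> 0\<^sub>v m"
    proof
      assume r0: "r = 0\<^sub>v m"
      have "\<Phi>S *\<^sub>v (adj \<Phi>S *\<^sub>v x) = x"
      proof (rule eq_vecI)
        fix i assume "i < dim_vec x"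
        hence i: "i < m" using x by auto
        have "r $ i = x $ i - (\<Phi>S *\<^sub>v (adj \<Phi>S *\<^sub>v x)) $ i" unfolding r_def using i x PSc by simp
        thus "(\<Phi>S *\<^sub>v (adj \<Phi>S *\<^sub>v x)) $ i = x $ i" using r0 i by simp
      qed (use x PSc in simp)
      moreover have "\<Phi>S *\<^sub>v (adj \<Phi>S *\<^sub>v x) \<in> S" using rngS PSc x by auto
      ultimately show False using xS unfolding S_def by simp
    qed
    obtain k0 \<Phi>0 where P0: "isom m k0 \<Phi>0" and rng0: "\<forall>y\<in>carrier_vec k0. \<Phi>0 *\<^sub>v y \<in> Sp"
      and proj0: "\<forall>w\<in>Sp. \<Phi>0 *\<^sub>v (adj \<Phi>0 *\<^sub>v w) = w" using onb_exists[OF Spsub] by blast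
    have P0c: "\<Phi>0 \<in> carrier_mat m k0" using P0 unfolding isom_def by auto
    have k0pos: "0 < k0"
    proof (rule ccontr)
      assume "\<not> 0 < k0"
      hence "k0 = 0" by auto
      hence "Sp \<subseteq> {0\<^sub>v m}" using isom_range_zero[of m \<Phi>0 Sp] P0 proj0 Spsub unfolding is_subspace_def by auto
      thus False using rSp rne by auto
    qed
    define M where "M = {k. 0 < k \<and> (\<exists>\<Phi>. isom m k \<Phi> \<and> (\<forall>y\<in>carrier_vec k. \<Phi> *\<^sub>v y \<in> Sp) \<and>
        (\<forall>g\<in>carrier G. \<forall>y\<in>carrier_vec k. \<exists>z\<in>carrier_vec k. \<rho> g *\<^sub>v (\<Phi> *\<^sub>v y) = \<Phi> *\<^sub>v z))}"
    have "k0 \<in> M" unfolding M_def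
    proof (intro CollectI conjI k0pos exI[of _ \<Phi>0] P0 rng0 ballI)
      fix g and y :: "complex vec" assume g: "g \<in> carrier G" and y: "y \<in> carrier_vec k0"
      have "\<rho> g *\<^sub>v (\<Phi>0 *\<^sub>v y) \<in> Sp" using Spinv[OF g] rng0 y by auto
      hence "\<rho> g *\<^sub>v (\<Phi>0 *\<^sub>v y) = \<Phi>0 *\<^sub>v (adj \<Phi>0 *\<^sub>v (\<rho> g *\<^sub>v (\<Phi>0 *\<^sub>v y)))" using proj0 by auto
      moreover have "adj \<Phi>0 *\<^sub>v (\<rho> g *\<^sub>v (\<Phi>0 *\<^sub>v y)) \<in> carrier_vec k0" using P0c rc[OF g] y by auto
      ultimately show "\<exists>z\<in>carrier_vec k0. \<rho> g *\<^sub>v (\<Phi>0 *\<^sub>v y) = \<Phi>0 *\<^sub>v z" by blast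
    qed
    define k where "k = (LEAST k. k \<in> M)"
    have "k \<in> M" unfolding k_def using \<open>k0 \<in> M\<close> by (rule LeastI)
    then obtain \<Phi> where kpos: "0 < k" and P: "isom m k \<Phi>" and rngP: "\<forall>y\<in>carrier_vec k. \<Phi> *\<^sub>v y \<in> Sp"
      and invP: "\<forall>g\<in>carrier G. \<forall>y\<in>carrier_vec k. \<exists>z\<in>carrier_vec k. \<rho> g *\<^sub>v (\<Phi> *\<^sub>v y) = \<Phi> *\<^sub>v z"
      unfolding M_def by blast
    have minimal: False if "0 < j" "j < k" "isom m j \<Psi>" "\<forall>y\<in>carrier_vec j. \<Psi> *\<^sub>v y \<in> Sp"
        "\<forall>g\<in>carrier G. \<forall>y\<in>carrier_vec j. \<exists>z\<in>carrier_vec j. \<rho> g *\<^sub>v (\<Psi> *\<^sub>v y) = \<Psi> *\<^sub>v z" for j \<Psi>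
    proof -
      have "j \<in> M" unfolding M_def using that by blast
      hence "k \<le> j" unfolding k_def by (rule Least_le)
      thus False using that by auto
    qed
    have res: "(k, \<lambda>g. adj \<Phi> * \<rho> g * \<Phi>) \<in> irreps G \<and> (\<forall>g\<in>carrier G. \<rho> g * \<Phi> = \<Phi> * (adj \<Phi> * \<rho> g * \<Phi>))"
      by (rule minimal_irrep[OF G r Spsub P kpos rngP invP minimal]) auto
    have Pc: "\<Phi> \<in> carrier_mat m k" and PP: "adj \<Phi> * \<Phi> = 1\<^sub>m k" using P unfolding isom_def by auto
    define e where "e = \<Phi> *\<^sub>v unit_vec k 0"
    have "e \<in> isotypic G m \<rho> (k, \<lambda>g. adj \<Phi> * \<rho> g * \<Phi>)"
      unfolding e_def using res Pc by (intro iso_gen) auto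
    hence eS: "e \<in> S" unfolding S_def U_def using res span_in_inc by blast
    have eSp: "e \<in> Sp" unfolding e_def using rngP by auto
    have "cip e e = 0" using eSp eS unfolding Sp_def by auto
    hence "e = 0\<^sub>v m" using cip_self_zero[of e m] eSp unfolding Sp_def by auto
    hence "adj \<Phi> *\<^sub>v e = 0\<^sub>v k" using Pc by (intro eq_vecI) (auto simp: scalar_prod_def)
    moreover have "adj \<Phi> *\<^sub>v e = unit_vec k 0" unfolding e_def using Pc PP
      by (subst assoc_mult_mat_vec[symmetric]) auto
    ultimately have "unit_vec k 0 $ 0 = (0\<^sub>v k :: complex vec) $ 0" by simp
    thus False using kpos by simp
  qed
qed



lemma sum_div_mod: fixes p q :: nat shows "(\<Sum>k<p*q. f (k div q) (k mod q)) = (\<Sum>a<p. \<Sum>b<q. f a b)"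
proof -
  have "(\<Sum>k<p*q. f (k div q) (k mod q)) = (\<Sum>ab\<in>{..<p}\<times>{..<q}. f (fst ab) (snd ab))"
  proof (rule sum.reindex_bij_witness[of _ "\<lambda>ab. fst ab * q + snd ab" "\<lambda>k. (k div q, k mod q)"])
    fix k assume k: "k \<in> {..<p*q}"
    hence q: "q > 0" by (cases "q = 0") auto
    show "fst (k div q, k mod q) * q + snd (k div q, k mod q) = k" by simp
    show "(k div q, k mod q) \<in> {..<p} \<times> {..<q}" using k q by (auto simp: less_mult_imp_div_less)
    show "f (fst (k div q, k mod q)) (snd (k div q, k mod q)) = f (k div q) (k mod q)" by simp
  next
    fix ab assume ab: "ab \<in> {..<p} \<times> {..<q}"
    then obtain a b where e: "ab = (a,b)" and a: "a < p" and b: "b < q" by auto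
    show "((fst ab * q + snd ab) div q, (fst ab * q + snd ab) mod q) = ab" using e b by auto
    have "a * q + b < a * q + q" using b by auto
    also have "\<dots> = (Suc a) * q" by simp
    also have "\<dots> \<le> p * q" using a by (intro mult_right_mono) auto
    finally show "fst ab * q + snd ab \<in> {..<p*q}" using e by auto
  qed
  also have "\<dots> = (\<Sum>a<p. \<Sum>b<q. f a b)" by (subst sum.cartesian_product) (simp add: case_prod_beta)
  finally show ?thesis .
qed

lemma kron_carrier[simp]: "A \<in> carrier_mat p p' \<Longrightarrow> B \<in> carrier_mat q q' \<Longrightarrow> kron A B \<in> carrier_mat (p*q) (p'*q')"
  unfolding kron_def by auto
lemma kron_vec_carrier[simp]: "u \<in> carrier_vec p \<Longrightarrow> v \<in> carrier_vec q \<Longrightarrow> kron_vec u v \<in> carrier_vec (p*q)"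
  unfolding kron_vec_def by auto

lemma div_mod_bounds: fixes p q i :: nat assumes "i < p * q" shows "i div q < p" "i mod q < q"
proof -
  have q: "q > 0" using assms by (cases "q = 0") auto
  show "i div q < p" using assms q by (simp add: less_mult_imp_div_less)
  show "i mod q < q" using q by auto
qed

lemma kron_mult_vec:
  assumes A: "A \<in> carrier_mat p p'" and B: "B \<in> carrier_mat q q'" and u: "u \<in> carrier_vec p'" and v: "v \<in> carrier_vec q'"
  shows "kron A B *\<^sub>v kron_vec u v = kron_vec (A *\<^sub>v u) (B *\<^sub>v v)"
proof (rule eq_vecI)
  fix i assume "i < dim_vec (kron_vec (A *\<^sub>v u) (B *\<^sub>v v))"
  hence i: "i < p * q" using A B unfolding kron_vec_def by auto
  note bd = div_mod_bounds[OF i]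
  have "(kron A B *\<^sub>v kron_vec u v) $ i = (\<Sum>k<p'*q'. A $$ (i div q, k div q') * B $$ (i mod q, k mod q') * (u $ (k div q') * v $ (k mod q')))"
    using i A B u v by (auto simp: kron_def kron_vec_def scalar_prod_def atLeast0LessThan row_def intro!: sum.cong dest: div_mod_bounds)
  also have "\<dots> = (\<Sum>a<p'. \<Sum>b<q'. A $$ (i div q, a) * B $$ (i mod q, b) * (u $ a * v $ b))"
    by (rule sum_div_mod)
  also have "\<dots> = (\<Sum>a<p'. A $$ (i div q, a) * u $ a) * (\<Sum>b<q'. B $$ (i mod q, b) * v $ b)"
    by (simp add: sum_product mult_ac)
  also have "\<dots> = (kron_vec (A *\<^sub>v u) (B *\<^sub>v v)) $ i"
    using i A B u v bd by (auto simp: kron_vec_def scalar_prod_def atLeast0LessThan)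
  finally show "(kron A B *\<^sub>v kron_vec u v) $ i = kron_vec (A *\<^sub>v u) (B *\<^sub>v v) $ i" .
qed (use A B in \<open>auto simp: kron_def kron_vec_def\<close>)

lemma kron_mult:
  assumes A: "A \<in> carrier_mat p p'" and B: "B \<in> carrier_mat q q'" and C: "C \<in> carrier_mat p' p''" and D: "D \<in> carrier_mat q' q''"
  shows "kron A B * kron C D = kron (A * C) (B * D)"
proof (rule eq_matI)
  fix i j assume "i < dim_row (kron (A * C) (B * D))" "j < dim_col (kron (A * C) (B * D))"
  hence i: "i < p * q" and j: "j < p'' * q''" using A B C D unfolding kron_def by auto
  note bi = div_mod_bounds[OF i] and bj = div_mod_bounds[OF j]
  have "(kron A B * kron C D) $$ (i,j) = (\<Sum>k<p'*q'. A $$ (i div q, k div q') * B $$ (i mod q, k mod q') * (C $$ (k div q', j div q'') * D $$ (k mod q', j mod q'')))"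
    using i j A B C D by (auto simp: kron_def scalar_prod_def atLeast0LessThan row_def col_def intro!: sum.cong dest: div_mod_bounds)
  also have "\<dots> = (\<Sum>a<p'. \<Sum>b<q'. A $$ (i div q, a) * B $$ (i mod q, b) * (C $$ (a, j div q'') * D $$ (b, j mod q'')))"
    by (rule sum_div_mod)
  also have "\<dots> = (\<Sum>a<p'. A $$ (i div q, a) * C $$ (a, j div q'')) * (\<Sum>b<q'. B $$ (i mod q, b) * D $$ (b, j mod q''))"
    by (simp add: sum_product mult_ac)
  also have "\<dots> = kron (A * C) (B * D) $$ (i,j)"
    using i j A B C D bi bj by (auto simp: kron_def scalar_prod_def atLeast0LessThan row_def col_def)
  finally show "(kron A B * kron C D) $$ (i,j) = kron (A * C) (B * D) $$ (i,j)" .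
qed (use A B C D in \<open>auto simp: kron_def\<close>)

lemma kron_vec_add_left: "u \<in> carrier_vec p \<Longrightarrow> u' \<in> carrier_vec p \<Longrightarrow> v \<in> carrier_vec q \<Longrightarrow>
  kron_vec (u + u') v = kron_vec u v + kron_vec u' v"
  by (intro eq_vecI) (auto simp: kron_vec_def distrib_right dest: div_mod_bounds)
lemma kron_vec_add_right: "u \<in> carrier_vec p \<Longrightarrow> v \<in> carrier_vec q \<Longrightarrow> v' \<in> carrier_vec q \<Longrightarrow>
  kron_vec u (v + v') = kron_vec u v + kron_vec u v'"
  by (intro eq_vecI) (auto simp: kron_vec_def distrib_left dest: div_mod_bounds)
lemma kron_vec_smult_left: "u \<in> carrier_vec p \<Longrightarrow> v \<in> carrier_vec q \<Longrightarrow> kron_vec (c \<cdot>\<^sub>v u) v = c \<cdot>\<^sub>v kron_vec u v"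
  by (intro eq_vecI) (auto simp: kron_vec_def mult.assoc dest: div_mod_bounds)
lemma kron_vec_smult_right: "u \<in> carrier_vec p \<Longrightarrow> v \<in> carrier_vec q \<Longrightarrow> kron_vec u (c \<cdot>\<^sub>v v) = c \<cdot>\<^sub>v kron_vec u v"
  by (intro eq_vecI) (auto simp: kron_vec_def mult_ac dest: div_mod_bounds)
lemma kron_vec_zero_left: "v \<in> carrier_vec q \<Longrightarrow> kron_vec (0\<^sub>v p) v = 0\<^sub>v (p*q)"
  by (intro eq_vecI) (auto simp: kron_vec_def dest: div_mod_bounds)
lemma kron_vec_zero_right: "u \<in> carrier_vec p \<Longrightarrow> kron_vec u (0\<^sub>v q) = 0\<^sub>v (p*q)"
  by (intro eq_vecI) (auto simp: kron_vec_def dest: div_mod_bounds)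



lemma zero_subspace: "is_subspace d {0\<^sub>v d}"
  unfolding is_subspace_def by auto

lemma ker_subspace: "K \<in> carrier_mat d d \<Longrightarrow> is_subspace d (ker_mat d K)"
proof -
  assume K: "K \<in> carrier_mat d d"
  have "ker_mat d K = {x \<in> carrier_vec d. K *\<^sub>v x \<in> {0\<^sub>v d}}" unfolding ker_mat_def by auto
  thus ?thesis using preimage_subspace[OF K zero_subspace] by simp
qed

lemma eig_subspace: assumes A: "A \<in> carrier_mat d d" shows "is_subspace d {x \<in> carrier_vec d. A *\<^sub>v x = c \<cdot>\<^sub>v x}"
  unfolding is_subspace_def
proof (intro conjI ballI allI)
  show "0\<^sub>v d \<in> {x \<in> carrier_vec d. A *\<^sub>v x = c \<cdot>\<^sub>v x}" using A by (auto intro!: eq_vecI simp: scalar_prod_def)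
  fix u v assume u: "u \<in> {x \<in> carrier_vec d. A *\<^sub>v x = c \<cdot>\<^sub>v x}" and v: "v \<in> {x \<in> carrier_vec d. A *\<^sub>v x = c \<cdot>\<^sub>v x}"
  have "A *\<^sub>v (u + v) = A *\<^sub>v u + A *\<^sub>v v" by (rule mult_add_distrib_mat_vec) (use u v A in auto)
  also have "\<dots> = c \<cdot>\<^sub>v u + c \<cdot>\<^sub>v v" using u v by simp
  also have "\<dots> = c \<cdot>\<^sub>v (u + v)" using u v by (intro smult_add_distrib_vec[symmetric]) auto
  finally show "u + v \<in> {x \<in> carrier_vec d. A *\<^sub>v x = c \<cdot>\<^sub>v x}" using u v by auto
next
  fix c' u assume u: "u \<in> {x \<in> carrier_vec d. A *\<^sub>v x = c \<cdot>\<^sub>v x}"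
  have "A *\<^sub>v (c' \<cdot>\<^sub>v u) = c' \<cdot>\<^sub>v (A *\<^sub>v u)" by (rule mult_mat_vec) (use u A in auto)
  also have "\<dots> = c \<cdot>\<^sub>v (c' \<cdot>\<^sub>v u)" using u by (auto simp: smult_smult_assoc mult.commute)
  finally show "c' \<cdot>\<^sub>v u \<in> {x \<in> carrier_vec d. A *\<^sub>v x = c \<cdot>\<^sub>v x}" using u by auto
qed auto

lemma tensor_sub_carrier: "S \<subseteq> carrier_vec m \<Longrightarrow> T \<subseteq> carrier_vec n \<Longrightarrow> tensor_sub m n S T \<subseteq> carrier_vec (m*n)"
  unfolding tensor_sub_def by (rule span_in_carrier) (blast intro: kron_vec_carrier)

lemma diag_carrier: "diag_isotypic G m \<rho>A n \<rho>B \<subseteq> carrier_vec (m*n)"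
  unfolding diag_isotypic_def using tensor_sub_carrier[OF iso_carrier iso_carrier]
  by (intro span_in_carrier) blast

lemma diag_subspace: "is_subspace (m*n) (diag_isotypic G m \<rho>A n \<rho>B)"
  unfolding diag_isotypic_def using tensor_sub_carrier[OF iso_carrier iso_carrier]
  by (intro span_in_subspace) blast

lemma in_diag: assumes lam: "lam \<in> irreps G" and u: "u \<in> isotypic G m \<rho>A lam" and v: "v \<in> isotypic G n \<rho>B lam"
  shows "kron_vec u v \<in> diag_isotypic G m \<rho>A n \<rho>B"
proof -
  have "kron_vec u v \<in> tensor_sub m n (isotypic G m \<rho>A lam) (isotypic G n \<rho>B lam)"
    unfolding tensor_sub_def using u v by (intro subsetD[OF span_in_inc]) blast
  thus ?thesis unfolding diag_isotypic_def using lam by (intro subsetD[OF span_in_inc]) blast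
qed

lemma K_carrier: "TB \<in> carrier_mat n n \<Longrightarrow> kron TA (1\<^sub>m n) - kron (1\<^sub>m m) TB \<in> carrier_mat (m*n) (m*n)"
  by (rule minus_carrier_mat) (rule kron_carrier[OF one_carrier_mat])

lemma K_kron:
  assumes TA: "TA \<in> carrier_mat m m" and TB: "TB \<in> carrier_mat n n" and u: "u \<in> carrier_vec m" and v: "v \<in> carrier_vec n"
  shows "(kron TA (1\<^sub>m n) - kron (1\<^sub>m m) TB) *\<^sub>v kron_vec u v = kron_vec (TA *\<^sub>v u) v - kron_vec u (TB *\<^sub>v v)"
proof -
  have "(kron TA (1\<^sub>m n) - kron (1\<^sub>m m) TB) *\<^sub>v kron_vec u v = kron TA (1\<^sub>m n) *\<^sub>v kron_vec u v - kron (1\<^sub>m m) TB *\<^sub>v kron_vec u v"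
    using TA TB u v by (intro minus_mult_distrib_mat_vec[of _ "m*n" "m*n"]) (auto intro: kron_carrier kron_vec_carrier)
  also have "\<dots> = kron_vec (TA *\<^sub>v u) v - kron_vec u (TB *\<^sub>v v)"
    using TA TB u v by (simp add: kron_mult_vec[of _ m m _ n n])
  finally show ?thesis .
qed

lemma part2:
  assumes TA: "TA \<in> carrier_mat m m" and TB: "TB \<in> carrier_mat n n"
    and hyp: "\<forall>lam\<in>irreps G. (\<forall>v\<in>isotypic G m \<rho>A lam. TA *\<^sub>v v = a lam \<cdot>\<^sub>v v) \<and>
                         (\<forall>v\<in>isotypic G n \<rho>B lam. TB *\<^sub>v v = a lam \<cdot>\<^sub>v v)"
  shows "diag_isotypic G m \<rho>A n \<rho>B \<subseteq> ker_mat (m * n) (kron TA (1\<^sub>m n) - kron (1\<^sub>m m) TB)"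
proof -
  let ?K = "kron TA (1\<^sub>m n) - kron (1\<^sub>m m) TB"
  have Kc: "?K \<in> carrier_mat (m*n) (m*n)" using K_carrier[OF TB] .
  have "tensor_sub m n (isotypic G m \<rho>A lam) (isotypic G n \<rho>B lam) \<subseteq> ker_mat (m * n) ?K"
    if lam: "lam \<in> irreps G" for lam
    unfolding tensor_sub_def
  proof (rule span_in_min[OF ker_subspace[OF Kc]], rule subsetI)
    fix x assume "x \<in> {kron_vec u v |u v. u \<in> isotypic G m \<rho>A lam \<and> v \<in> isotypic G n \<rho>B lam}"
    then obtain u v where x: "x = kron_vec u v" and u: "u \<in> isotypic G m \<rho>A lam" and v: "v \<in> isotypic G n \<rho>B lam" by blast
    have uc: "u \<in> carrier_vec m" and vc: "v \<in> carrier_vec n" using u v iso_carrier by blast+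
    have "?K *\<^sub>v x = kron_vec (a lam \<cdot>\<^sub>v u) v - kron_vec u (a lam \<cdot>\<^sub>v v)"
      unfolding x K_kron[OF TA TB uc vc] using hyp lam u v by auto
    also have "\<dots> = 0\<^sub>v (m*n)"
    proof (rule eq_vecI)
      fix i assume "i < dim_vec (0\<^sub>v (m*n) :: complex vec)"
      hence i: "i < m * n" by simp
      note b = div_mod_bounds[OF i]
      show "(kron_vec (a lam \<cdot>\<^sub>v u) v - kron_vec u (a lam \<cdot>\<^sub>v v)) $ i = 0\<^sub>v (m*n) $ i"
        using uc vc i b by (simp add: kron_vec_def)
    qed (use uc vc in \<open>simp add: kron_vec_def\<close>)
    finally show "x \<in> ker_mat (m * n) ?K" unfolding ker_mat_def using x uc vc by auto
  qed
  thus ?thesis unfolding diag_isotypic_def by (intro span_in_min[OF ker_subspace[OF Kc]]) blast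
qed



lemma rep_alg_carrier[simp]: "rep_alg G d \<rho> z \<in> carrier_mat d d"
  unfolding rep_alg_def by auto

lemma rep_alg_inter:
  assumes P: "\<Phi> \<in> carrier_mat m d" and rc: "\<forall>g\<in>carrier G. \<rho> g \<in> carrier_mat m m"
    and sc: "\<forall>g\<in>carrier G. \<sigma> g \<in> carrier_mat d d" and i: "\<forall>g\<in>carrier G. \<rho> g * \<Phi> = \<Phi> * \<sigma> g"
  shows "rep_alg G m \<rho> z * \<Phi> = \<Phi> * rep_alg G d \<sigma> z"
proof (rule eq_matI)
  fix i j assume "i < dim_row (\<Phi> * rep_alg G d \<sigma> z)" "j < dim_col (\<Phi> * rep_alg G d \<sigma> z)"
  hence i': "i < m" and j: "j < d" using P rep_alg_carrier[of G d \<sigma> z] by auto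
  have "(rep_alg G m \<rho> z * \<Phi>) $$ (i,j) = (\<Sum>l<m. (\<Sum>g\<in>carrier G. z g * \<rho> g $$ (i,l)) * \<Phi> $$ (l,j))"
    using i' j P by (auto simp: rep_alg_def scalar_prod_def atLeast0LessThan row_def col_def intro!: sum.cong)
  also have "\<dots> = (\<Sum>g\<in>carrier G. z g * (\<Sum>l<m. \<rho> g $$ (i,l) * \<Phi> $$ (l,j)))"
    by (simp add: sum_distrib_left sum_distrib_right mult.assoc sum.swap[of _ "{..<m}"])
  also have "\<dots> = (\<Sum>g\<in>carrier G. z g * (\<rho> g * \<Phi>) $$ (i,j))"
    using i' j P rc by (auto simp: scalar_prod_def atLeast0LessThan row_def col_def intro!: sum.cong)
  also have "\<dots> = (\<Sum>g\<in>carrier G. z g * (\<Phi> * \<sigma> g) $$ (i,j))"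
    using i by (intro sum.cong) auto
  also have "\<dots> = (\<Sum>g\<in>carrier G. z g * (\<Sum>l<d. \<Phi> $$ (i,l) * \<sigma> g $$ (l,j)))"
    using i' j P sc by (auto simp: scalar_prod_def atLeast0LessThan row_def col_def intro!: sum.cong)
  also have "\<dots> = (\<Sum>l<d. \<Phi> $$ (i,l) * (\<Sum>g\<in>carrier G. z g * \<sigma> g $$ (l,j)))"
    by (simp add: sum_distrib_left mult_ac sum.swap[of _ "carrier G"])
  also have "\<dots> = (\<Phi> * rep_alg G d \<sigma> z) $$ (i,j)"
    using i' j P by (auto simp: rep_alg_def scalar_prod_def atLeast0LessThan row_def col_def intro!: sum.cong)
  finally show "(rep_alg G m \<rho> z * \<Phi>) $$ (i,j) = (\<Phi> * rep_alg G d \<sigma> z) $$ (i,j)" .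
qed (use P in \<open>auto simp: rep_alg_def\<close>)

lemma iso_scalar:
  assumes r: "unitary_rep G m \<rho>" and lam: "lam \<in> irreps G"
    and sc: "rep_alg G (fst lam) (snd lam) z = c \<cdot>\<^sub>m 1\<^sub>m (fst lam)"
  shows "\<forall>v\<in>isotypic G m \<rho> lam. rep_alg G m \<rho> z *\<^sub>v v = c \<cdot>\<^sub>v v"
proof -
  have "isotypic G m \<rho> lam \<subseteq> {x \<in> carrier_vec m. rep_alg G m \<rho> z *\<^sub>v x = c \<cdot>\<^sub>v x}"
    unfolding isotypic_def
  proof (rule span_in_min[OF eig_subspace[OF rep_alg_carrier]], rule subsetI)
    fix x assume "x \<in> {\<Phi> *\<^sub>v v |\<Phi> v. \<Phi> \<in> carrier_mat m (fst lam) \<and> v \<in> carrier_vec (fst lam) \<and> (\<forall>g\<in>carrier G. \<rho> g * \<Phi> = \<Phi> * snd lam g)}"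
    then obtain \<Phi> v where x: "x = \<Phi> *\<^sub>v v" and P: "\<Phi> \<in> carrier_mat m (fst lam)" and v: "v \<in> carrier_vec (fst lam)"
      and i: "\<forall>g\<in>carrier G. \<rho> g * \<Phi> = \<Phi> * snd lam g" by blast
    have e: "rep_alg G m \<rho> z * \<Phi> = \<Phi> * rep_alg G (fst lam) (snd lam) z"
      using rep_carrier[OF r] rep_carrier[OF irreps_rep[OF lam]] P i by (intro rep_alg_inter) auto
    have "rep_alg G m \<rho> z *\<^sub>v x = (rep_alg G m \<rho> z * \<Phi>) *\<^sub>v v" unfolding x using P v
      by (simp add: assoc_mult_mat_vec[of _ m m _ "fst lam"])
    also have "\<dots> = \<Phi> *\<^sub>v ((c \<cdot>\<^sub>m 1\<^sub>m (fst lam)) *\<^sub>v v)" unfolding e sc using P v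
      by (simp add: assoc_mult_mat_vec[of _ m "fst lam" _ "fst lam"])
    also have "(c \<cdot>\<^sub>m 1\<^sub>m (fst lam)) *\<^sub>v v = c \<cdot>\<^sub>v v"
    proof -
      have e: "\<And>ia i. c * (if ia = i then 1 else 0) * v $ ia = (if ia = i then c * v $ ia else 0)" by simp
      show ?thesis using v by (intro eq_vecI) (auto simp: scalar_prod_def unit_vec_def e)
    qed
    also have "\<Phi> *\<^sub>v (c \<cdot>\<^sub>v v) = c \<cdot>\<^sub>v x" unfolding x using P v by (rule mult_mat_vec)
    finally show "x \<in> {x \<in> carrier_vec m. rep_alg G m \<rho> z *\<^sub>v x = c \<cdot>\<^sub>v x}" using x P v by auto
  qed
  thus ?thesis by auto
qed

lemma equiv_iso:
  assumes r: "unitary_rep G n \<rho>" and lam: "lam \<in> irreps G" and mu: "mu \<in> irreps G" and eq: "equiv_rep G lam mu"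
  shows "isotypic G n \<rho> mu \<subseteq> isotypic G n \<rho> lam"
proof -
  obtain P Q where d: "fst lam = fst mu" and Pc: "P \<in> carrier_mat (fst lam) (fst lam)" and Qc: "Q \<in> carrier_mat (fst lam) (fst lam)"
    and PQ: "P * Q = 1\<^sub>m (fst lam)" and i: "\<forall>g\<in>carrier G. P * snd lam g = snd mu g * P"
    using eq unfolding equiv_rep_def by blast
  let ?d = "fst lam"
  show ?thesis unfolding isotypic_def
  proof (rule span_in_mono[OF subsetI])
    fix x assume "x \<in> {\<Phi> *\<^sub>v v |\<Phi> v. \<Phi> \<in> carrier_mat n (fst mu) \<and> v \<in> carrier_vec (fst mu) \<and> (\<forall>g\<in>carrier G. \<rho> g * \<Phi> = \<Phi> * snd mu g)}"
    then obtain \<Phi> v where x: "x = \<Phi> *\<^sub>v v" and Ph: "\<Phi> \<in> carrier_mat n ?d" and v: "v \<in> carrier_vec ?d"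
      and j: "\<forall>g\<in>carrier G. \<rho> g * \<Phi> = \<Phi> * snd mu g" using d by auto
    have x': "x = (\<Phi> * P) *\<^sub>v (Q *\<^sub>v v)"
    proof -
      have "(\<Phi> * P) *\<^sub>v (Q *\<^sub>v v) = \<Phi> *\<^sub>v (P *\<^sub>v (Q *\<^sub>v v))" using Ph Pc Qc v by (simp add: assoc_mult_mat_vec)
      also have "P *\<^sub>v (Q *\<^sub>v v) = v" using Pc Qc v PQ by (subst assoc_mult_mat_vec[symmetric]) auto
      finally show ?thesis unfolding x by simp
    qed
    have "\<forall>g\<in>carrier G. \<rho> g * (\<Phi> * P) = (\<Phi> * P) * snd lam g"
    proof
      fix g assume g: "g \<in> carrier G"
      have sl: "snd lam g \<in> carrier_mat ?d ?d" using rep_carrier[OF irreps_rep[OF lam] g] .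
      have sm: "snd mu g \<in> carrier_mat ?d ?d" using rep_carrier[OF irreps_rep[OF mu] g] d by simp
      have rg: "\<rho> g \<in> carrier_mat n n" using rep_carrier[OF r g] .
      have "\<rho> g * (\<Phi> * P) = (\<rho> g * \<Phi>) * P" using rg Ph Pc by (simp add: assoc_mult_mat[of _ n n _ ?d _ ?d])
      also have "\<dots> = \<Phi> * (snd mu g * P)" using j g Ph sm Pc by (simp add: assoc_mult_mat[of _ n ?d _ ?d _ ?d])
      also have "\<dots> = \<Phi> * (P * snd lam g)" using i g by simp
      also have "\<dots> = (\<Phi> * P) * snd lam g" using Ph Pc sl by (simp add: assoc_mult_mat[of _ n ?d _ ?d _ ?d])
      finally show "\<rho> g * (\<Phi> * P) = (\<Phi> * P) * snd lam g" .
    qed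
    moreover have "\<Phi> * P \<in> carrier_mat n ?d" "Q *\<^sub>v v \<in> carrier_vec ?d" using Ph Pc Qc v by auto
    ultimately show "x \<in> span_in n {\<Phi> *\<^sub>v v |\<Phi> v. \<Phi> \<in> carrier_mat n (fst lam) \<and> v \<in> carrier_vec (fst lam) \<and> (\<forall>g\<in>carrier G. \<rho> g * \<Phi> = \<Phi> * snd lam g)}"
      using x' by (intro subsetD[OF span_in_inc]) blast
  qed auto
qed



lemma lin_pre_subspace:
  assumes T: "is_subspace d' T"
    and add: "\<And>x y. x \<in> carrier_vec d \<Longrightarrow> y \<in> carrier_vec d \<Longrightarrow> f (x + y) = f x + f y"
    and sm: "\<And>c x. x \<in> carrier_vec d \<Longrightarrow> f (c \<cdot>\<^sub>v x) = c \<cdot>\<^sub>v f x"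
    and z: "f (0\<^sub>v d) = 0\<^sub>v d'"
  shows "is_subspace d {x \<in> carrier_vec d. f x \<in> T}"
  unfolding is_subspace_def using subspace_zero[OF T] subspace_add[OF T] subspace_smult[OF T] add sm z
  by auto

lemma span_kron:
  assumes S1: "S1 \<subseteq> carrier_vec p" and S2: "S2 \<subseteq> carrier_vec q"
    and u: "u \<in> span_in p S1" and v: "v \<in> span_in q S2"
  shows "kron_vec u v \<in> span_in (p*q) {kron_vec s t | s t. s \<in> S1 \<and> t \<in> S2}"
proof -
  define T where "T = span_in (p*q) {kron_vec s t | s t. s \<in> S1 \<and> t \<in> S2}"
  have Tc: "{kron_vec s t | s t. s \<in> S1 \<and> t \<in> S2} \<subseteq> carrier_vec (p*q)" using S1 S2 by (blast intro: kron_vec_carrier)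
  have Ts: "is_subspace (p*q) T" unfolding T_def using span_in_subspace[OF Tc] .
  have A: "span_in q S2 \<subseteq> {v \<in> carrier_vec q. kron_vec s v \<in> T}" if s: "s \<in> S1" for s
  proof (rule span_in_min)
    have sc: "s \<in> carrier_vec p" using s S1 by auto
    show "is_subspace q {v \<in> carrier_vec q. kron_vec s v \<in> T}"
      by (rule lin_pre_subspace[OF Ts]) (use sc in \<open>auto simp: kron_vec_add_right kron_vec_smult_right kron_vec_zero_right\<close>)
    show "S2 \<subseteq> {v \<in> carrier_vec q. kron_vec s v \<in> T}" unfolding T_def using S2 s by (blast intro: subsetD[OF span_in_inc])
  qed
  have vc: "v \<in> carrier_vec q" using span_in_carrier[OF S2] v by auto
  have B: "span_in p S1 \<subseteq> {u \<in> carrier_vec p. kron_vec u v \<in> T}"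
  proof (rule span_in_min)
    show "is_subspace p {u \<in> carrier_vec p. kron_vec u v \<in> T}"
      by (rule lin_pre_subspace[OF Ts]) (use vc in \<open>auto simp: kron_vec_add_left kron_vec_smult_left kron_vec_zero_left\<close>)
    show "S1 \<subseteq> {u \<in> carrier_vec p. kron_vec u v \<in> T}" using A v S1 by auto
  qed
  show ?thesis using B u unfolding T_def by auto
qed

lemma carrier_kron_span:
  fixes x :: "complex vec"
  assumes x: "x \<in> carrier_vec (p*q)"
  shows "x \<in> span_in (p*q) {kron_vec u v | u v. u \<in> carrier_vec p \<and> v \<in> carrier_vec q}"
proof -
  define S where "S = span_in (p*q) {kron_vec u v | u v. (u :: complex vec) \<in> carrier_vec p \<and> v \<in> carrier_vec q}"
  have Sc: "{kron_vec u v | u v. (u :: complex vec) \<in> carrier_vec p \<and> v \<in> carrier_vec q} \<subseteq> carrier_vec (p*q)" by (blast intro: kron_vec_carrier)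
  define J where "J = {..<p} \<times> {..<q}"
  define f where "f = (\<lambda>ab. kron_vec (unit_vec p (fst ab)) (unit_vec q (snd ab)) :: complex vec)"
  define c where "c = (\<lambda>ab. x $ (fst ab * q + snd ab))"
  have "vec (p*q) (\<lambda>i. \<Sum>j\<in>J. c j * f j $ i) \<in> S"
    unfolding S_def by (rule subspace_sum[OF span_in_subspace[OF Sc]]) (auto simp: J_def f_def intro!: subsetD[OF span_in_inc] unit_vec_carrier)
  moreover have "vec (p*q) (\<lambda>i. \<Sum>j\<in>J. c j * f j $ i) = x"
  proof (rule eq_vecI)
    fix i assume "i < dim_vec x"
    hence i: "i < p*q" using x by auto
    note b = div_mod_bounds[OF i]
    have "(\<Sum>j\<in>J. c j * f j $ i) = (\<Sum>j\<in>J. if j = (i div q, i mod q) then c j else 0)"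
    proof (rule sum.cong)
      fix j assume "j \<in> J"
      then obtain a bb where j: "j = (a, bb)" "a < p" "bb < q" unfolding J_def by auto
      show "c j * f j $ i = (if j = (i div q, i mod q) then c j else 0)"
        using i b j by (auto simp: f_def kron_vec_def unit_vec_def)
    qed simp
    also have "\<dots> = c (i div q, i mod q)" using b unfolding J_def by (simp add: sum.delta')
    also have "\<dots> = x $ i" unfolding c_def by simp
    finally show "vec (p*q) (\<lambda>i. \<Sum>j\<in>J. c j * f j $ i) $ i = x $ i" using i by simp
  qed (use x in simp)
  ultimately show ?thesis unfolding S_def by simp
qed

definition ap :: "complex mat \<Rightarrow> complex list \<Rightarrow> complex vec \<Rightarrow> complex vec" where
  "ap K L x = foldr (\<lambda>c y. y - (1/c) \<cdot>\<^sub>v (K *\<^sub>v y)) L x"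

lemma ap_Cons: "ap K (c # L) x = ap K L x - (1/c) \<cdot>\<^sub>v (K *\<^sub>v ap K L x)"
  unfolding ap_def by simp
lemma ap_Nil: "ap K [] x = x" unfolding ap_def by simp

lemma ap_carrier: assumes K: "K \<in> carrier_mat d d" and x: "x \<in> carrier_vec d" shows "ap K L x \<in> carrier_vec d"
  by (induction L) (use K x in \<open>auto simp: ap_Nil ap_Cons\<close>)

lemma ap_add: assumes K: "K \<in> carrier_mat d d" and x: "x \<in> carrier_vec d" and y: "y \<in> carrier_vec d"
  shows "ap K L (x + y) = ap K L x + ap K L y"
proof (induction L)
  case Nil then show ?case by (simp add: ap_Nil)
next
  case (Cons c L)
  define a where "a = ap K L x"
  define b where "b = ap K L y"
  have a: "a \<in> carrier_vec d" and b: "b \<in> carrier_vec d" unfolding a_def b_def using ap_carrier K x y by auto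
  have "ap K (c # L) (x + y) = (a + b) - (1/c) \<cdot>\<^sub>v (K *\<^sub>v (a + b))" unfolding ap_Cons Cons a_def b_def ..
  also have "K *\<^sub>v (a + b) = K *\<^sub>v a + K *\<^sub>v b" using K a b by (rule mult_add_distrib_mat_vec)
  also have "(a + b) - (1/c) \<cdot>\<^sub>v (K *\<^sub>v a + K *\<^sub>v b) = (a - (1/c) \<cdot>\<^sub>v (K *\<^sub>v a)) + (b - (1/c) \<cdot>\<^sub>v (K *\<^sub>v b))"
    using K a b by (intro eq_vecI) (auto simp: algebra_simps)
  finally show ?case unfolding ap_Cons a_def b_def .
qed

lemma ap_smult: assumes K: "K \<in> carrier_mat d d" and x: "x \<in> carrier_vec d"
  shows "ap K L (s \<cdot>\<^sub>v x) = s \<cdot>\<^sub>v ap K L x"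
proof (induction L)
  case Nil then show ?case by (simp add: ap_Nil)
next
  case (Cons c L)
  define a where "a = ap K L x"
  have a: "a \<in> carrier_vec d" unfolding a_def using ap_carrier K x by auto
  have "ap K (c # L) (s \<cdot>\<^sub>v x) = s \<cdot>\<^sub>v a - (1/c) \<cdot>\<^sub>v (K *\<^sub>v (s \<cdot>\<^sub>v a))" unfolding ap_Cons Cons a_def ..
  also have "K *\<^sub>v (s \<cdot>\<^sub>v a) = s \<cdot>\<^sub>v (K *\<^sub>v a)" using K a by (rule mult_mat_vec)
  also have "s \<cdot>\<^sub>v a - (1/c) \<cdot>\<^sub>v (s \<cdot>\<^sub>v (K *\<^sub>v a)) = s \<cdot>\<^sub>v (a - (1/c) \<cdot>\<^sub>v (K *\<^sub>v a))"
    using K a by (intro eq_vecI) (auto simp: algebra_simps)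
  finally show ?case unfolding ap_Cons a_def .
qed

lemma ap_eig: assumes K: "K \<in> carrier_mat d d" and x: "x \<in> carrier_vec d" and e: "K *\<^sub>v x = e \<cdot>\<^sub>v x"
  shows "ap K L x = prod_list (map (\<lambda>c. 1 - e / c) L) \<cdot>\<^sub>v x"
proof (induction L)
  case Nil then show ?case by (simp add: ap_Nil)
next
  case (Cons c L)
  define p where "p = prod_list (map (\<lambda>c. 1 - e / c) L)"
  have "ap K (c # L) x = p \<cdot>\<^sub>v x - (1/c) \<cdot>\<^sub>v (K *\<^sub>v (p \<cdot>\<^sub>v x))" unfolding ap_Cons Cons p_def ..
  also have "K *\<^sub>v (p \<cdot>\<^sub>v x) = p \<cdot>\<^sub>v (e \<cdot>\<^sub>v x)" using K x e by (subst mult_mat_vec) auto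
  also have "p \<cdot>\<^sub>v x - (1/c) \<cdot>\<^sub>v (p \<cdot>\<^sub>v (e \<cdot>\<^sub>v x)) = ((1 - e/c) * p) \<cdot>\<^sub>v x"
    using x by (intro eq_vecI) (auto simp: algebra_simps)
  finally show ?case unfolding p_def by simp
qed

lemma ap_zero: assumes K: "K \<in> carrier_mat d d" shows "ap K L (0\<^sub>v d) = 0\<^sub>v d"
proof -
  have "K *\<^sub>v 0\<^sub>v d = 0 \<cdot>\<^sub>v 0\<^sub>v d" using K by (intro eq_vecI) (auto simp: scalar_prod_def)
  from ap_eig[OF K _ this] show ?thesis by auto
qed



lemma part1:
  assumes TA: "TA \<in> carrier_mat m m" and TB: "TB \<in> carrier_mat n n"
    and A: "A \<in> carrier_mat m m" and B: "B \<in> carrier_mat n n"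
    and cA: "TA * A = A * TA" and cB: "TB * B = B * TB"
  shows "(kron TA (1\<^sub>m n) - kron (1\<^sub>m m) TB) * kron A B = kron A B * (kron TA (1\<^sub>m n) - kron (1\<^sub>m m) TB)"
proof -
  have c1: "kron TA (1\<^sub>m n) \<in> carrier_mat (m*n) (m*n)" using TA by auto
  have c2: "kron (1\<^sub>m m) TB \<in> carrier_mat (m*n) (m*n)" using TB by auto
  have c3: "kron A B \<in> carrier_mat (m*n) (m*n)" using A B by auto
  have "(kron TA (1\<^sub>m n) - kron (1\<^sub>m m) TB) * kron A B = kron TA (1\<^sub>m n) * kron A B - kron (1\<^sub>m m) TB * kron A B"
    using c1 c2 c3 by (rule minus_mult_distrib_mat)
  also have "\<dots> = kron (TA * A) (1\<^sub>m n * B) - kron (1\<^sub>m m * A) (TB * B)"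
    using TA TB A B by (simp add: kron_mult[of _ m m _ n n _ m _ n])
  also have "\<dots> = kron (A * TA) (B * 1\<^sub>m n) - kron (A * 1\<^sub>m m) (B * TB)"
    using A B cA cB by simp
  also have "\<dots> = kron A B * kron TA (1\<^sub>m n) - kron A B * kron (1\<^sub>m m) TB"
    using TA TB A B by (simp add: kron_mult[of _ m m _ n n _ m _ n])
  also have "\<dots> = kron A B * (kron TA (1\<^sub>m n) - kron (1\<^sub>m m) TB)"
    using c3 c1 c2 by (rule mult_minus_distrib_mat[symmetric])
  finally show ?thesis .
qed

lemma prod_list_ones: "prod_list (map (\<lambda>c. 1 :: complex) L) = 1"
  by (induction L) auto

lemma part3:
  assumes G: "group G" and rA: "unitary_rep G m \<rho>A" and rB: "unitary_rep G n \<rho>B"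
    and sc: "\<forall>lam\<in>irreps G. rep_alg G (fst lam) (snd lam) z = \<alpha> lam \<cdot>\<^sub>m 1\<^sub>m (fst lam)"
    and inj: "\<forall>lam\<in>irreps G. \<forall>mu\<in>irreps G. \<alpha> lam = \<alpha> mu \<longrightarrow> equiv_rep G lam mu"
  shows "ker_mat (m * n) (kron (rep_alg G m \<rho>A z) (1\<^sub>m n) - kron (1\<^sub>m m) (rep_alg G n \<rho>B z)) \<subseteq> diag_isotypic G m \<rho>A n \<rho>B"
proof
  define TA where "TA = rep_alg G m \<rho>A z"
  define TB where "TB = rep_alg G n \<rho>B z"
  define K where "K = kron TA (1\<^sub>m n) - kron (1\<^sub>m m) TB"
  define KG where "KG = diag_isotypic G m \<rho>A n \<rho>B"
  have TAc: "TA \<in> carrier_mat m m" and TBc: "TB \<in> carrier_mat n n" unfolding TA_def TB_def by auto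
  have Kc: "K \<in> carrier_mat (m*n) (m*n)" unfolding K_def using K_carrier[OF TBc] .
  have KGs: "is_subspace (m*n) KG" unfolding KG_def by (rule diag_subspace)
  have eA: "\<forall>v\<in>isotypic G m \<rho>A lam. TA *\<^sub>v v = \<alpha> lam \<cdot>\<^sub>v v" if "lam \<in> irreps G" for lam
    unfolding TA_def using iso_scalar[OF rA that] sc that by auto
  have eB: "\<forall>v\<in>isotypic G n \<rho>B lam. TB *\<^sub>v v = \<alpha> lam \<cdot>\<^sub>v v" if "lam \<in> irreps G" for lam
    unfolding TB_def using iso_scalar[OF rB that] sc that by auto
  define Gd where "Gd = {x \<in> carrier_vec (m*n). \<exists>D. 0 \<notin> set D \<and> (\<forall>L. set D \<subseteq> set L \<and> 0 \<notin> set L \<longrightarrow> ap K L x \<in> KG)}"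
  have Gds: "is_subspace (m*n) Gd" unfolding is_subspace_def
  proof (intro conjI ballI allI)
    show "Gd \<subseteq> carrier_vec (m*n)" unfolding Gd_def by auto
    show "0\<^sub>v (m*n) \<in> Gd" unfolding Gd_def using ap_zero[OF Kc] subspace_zero[OF KGs]
      by (auto intro!: exI[of _ "[]"])
  next
    fix x y assume x: "x \<in> Gd" and y: "y \<in> Gd"
    obtain D1 where D1: "0 \<notin> set D1" "\<forall>L. set D1 \<subseteq> set L \<and> 0 \<notin> set L \<longrightarrow> ap K L x \<in> KG" and xc: "x \<in> carrier_vec (m*n)"
      using x unfolding Gd_def by auto
    obtain D2 where D2: "0 \<notin> set D2" "\<forall>L. set D2 \<subseteq> set L \<and> 0 \<notin> set L \<longrightarrow> ap K L y \<in> KG" and yc: "y \<in> carrier_vec (m*n)"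
      using y unfolding Gd_def by auto
    have "\<forall>L. set (D1 @ D2) \<subseteq> set L \<and> 0 \<notin> set L \<longrightarrow> ap K L (x + y) \<in> KG"
      using D1 D2 ap_add[OF Kc xc yc] subspace_add[OF KGs] by auto
    thus "x + y \<in> Gd" unfolding Gd_def using xc yc D1 D2 by (intro CollectI conjI exI[of _ "D1 @ D2"]) auto
  next
    fix c x assume x: "x \<in> Gd"
    obtain D1 where D1: "0 \<notin> set D1" "\<forall>L. set D1 \<subseteq> set L \<and> 0 \<notin> set L \<longrightarrow> ap K L x \<in> KG" and xc: "x \<in> carrier_vec (m*n)"
      using x unfolding Gd_def by auto
    have "\<forall>L. set D1 \<subseteq> set L \<and> 0 \<notin> set L \<longrightarrow> ap K L (c \<cdot>\<^sub>v x) \<in> KG"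
      using D1 ap_smult[OF Kc xc] subspace_smult[OF KGs] by auto
    thus "c \<cdot>\<^sub>v x \<in> Gd" unfolding Gd_def using xc D1 by auto
  qed
  define UA where "UA = (\<Union>lam\<in>irreps G. isotypic G m \<rho>A lam)"
  define UB where "UB = (\<Union>lam\<in>irreps G. isotypic G n \<rho>B lam)"
  have UAc: "UA \<subseteq> carrier_vec m" unfolding UA_def using iso_carrier by blast
  have UBc: "UB \<subseteq> carrier_vec n" unfolding UB_def using iso_carrier by blast
  define Gen where "Gen = {kron_vec s t | s t. s \<in> UA \<and> t \<in> UB}"
  have Genc: "Gen \<subseteq> carrier_vec (m*n)" unfolding Gen_def using UAc UBc by (blast intro: kron_vec_carrier)
  have GenGd: "Gen \<subseteq> Gd"
  proof
    fix x assume "x \<in> Gen"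
    then obtain u v lam mu where x: "x = kron_vec u v" and lam: "lam \<in> irreps G" and mu: "mu \<in> irreps G"
      and u: "u \<in> isotypic G m \<rho>A lam" and v: "v \<in> isotypic G n \<rho>B mu"
      unfolding Gen_def UA_def UB_def by blast
    have uc: "u \<in> carrier_vec m" and vc: "v \<in> carrier_vec n" using u v iso_carrier by blast+
    have xc: "x \<in> carrier_vec (m*n)" unfolding x using uc vc by auto
    define e where "e = \<alpha> lam - \<alpha> mu"
    have Kx: "K *\<^sub>v x = e \<cdot>\<^sub>v x"
    proof -
      have "K *\<^sub>v x = kron_vec (\<alpha> lam \<cdot>\<^sub>v u) v - kron_vec u (\<alpha> mu \<cdot>\<^sub>v v)"
        unfolding K_def x K_kron[OF TAc TBc uc vc] using eA[OF lam] eB[OF mu] u v by auto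
      also have "\<dots> = e \<cdot>\<^sub>v x"
      proof (rule eq_vecI)
        fix i assume "i < dim_vec (e \<cdot>\<^sub>v x)"
        hence i: "i < m * n" using xc by simp
        note b = div_mod_bounds[OF i]
        show "(kron_vec (\<alpha> lam \<cdot>\<^sub>v u) v - kron_vec u (\<alpha> mu \<cdot>\<^sub>v v)) $ i = (e \<cdot>\<^sub>v x) $ i"
          unfolding x e_def using uc vc i b by (simp add: kron_vec_def algebra_simps)
      qed (use uc vc xc in \<open>simp add: kron_vec_def\<close>)
      finally show ?thesis .
    qed
    show "x \<in> Gd"
    proof (cases "e = 0")
      case True
      hence "equiv_rep G lam mu" using inj lam mu unfolding e_def by auto
      hence "v \<in> isotypic G n \<rho>B lam" using equiv_iso[OF rB lam mu] v by auto
      hence xKG: "x \<in> KG" unfolding KG_def x using in_diag[OF lam u] by auto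
      have "\<forall>L. ap K L x = x" using ap_eig[OF Kc xc Kx] True by (simp add: prod_list_ones)
      thus ?thesis unfolding Gd_def using xc xKG by (auto intro!: exI[of _ "[]"])
    next
      case False
      have "ap K L x \<in> KG" if "set [e] \<subseteq> set L" for L
      proof -
        have "(0::complex) \<in> set (map (\<lambda>c. 1 - e / c) L)" using that False by force
        hence "prod_list (map (\<lambda>c. 1 - e / c) L) = 0" by (simp add: prod_list_zero_iff)
        hence "ap K L x = 0\<^sub>v (m*n)" using ap_eig[OF Kc xc Kx] xc by auto
        thus ?thesis using subspace_zero[OF KGs] by simp
      qed
      thus ?thesis unfolding Gd_def using xc False by (intro CollectI conjI exI[of _ "[e]"]) auto
    qed
  qed
  have carrGd: "carrier_vec (m*n) \<subseteq> Gd"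
  proof
    fix y :: "complex vec" assume y: "y \<in> carrier_vec (m*n)"
    have "{kron_vec u v | u v. (u :: complex vec) \<in> carrier_vec m \<and> v \<in> carrier_vec n} \<subseteq> span_in (m*n) Gen"
    proof
      fix w assume "w \<in> {kron_vec u v | u v. (u :: complex vec) \<in> carrier_vec m \<and> v \<in> carrier_vec n}"
      then obtain u v where w: "w = kron_vec u v" and u: "u \<in> carrier_vec m" and v: "v \<in> carrier_vec n" by blast
      have "u \<in> span_in m UA" using decomp[OF G rA] u unfolding UA_def by auto
      moreover have "v \<in> span_in n UB" using decomp[OF G rB] v unfolding UB_def by auto
      ultimately show "w \<in> span_in (m*n) Gen" unfolding w Gen_def by (rule span_kron[OF UAc UBc])
    qed
    hence "span_in (m*n) {kron_vec u v | u v. (u :: complex vec) \<in> carrier_vec m \<and> v \<in> carrier_vec n} \<subseteq> span_in (m*n) Gen"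
      by (rule span_in_mono[OF _ Genc])
    moreover have "span_in (m*n) Gen \<subseteq> Gd" by (rule span_in_min[OF Gds GenGd])
    ultimately show "y \<in> Gd" using carrier_kron_span[OF y] by auto
  qed
  fix x assume "x \<in> ker_mat (m * n) (kron (rep_alg G m \<rho>A z) (1\<^sub>m n) - kron (1\<^sub>m m) (rep_alg G n \<rho>B z))"
  hence xc: "x \<in> carrier_vec (m*n)" and Kx: "K *\<^sub>v x = 0\<^sub>v (m*n)" unfolding ker_mat_def K_def TA_def TB_def by auto
  have Kx': "K *\<^sub>v x = 0 \<cdot>\<^sub>v x" using Kx xc by auto
  obtain D where D: "0 \<notin> set D" "\<forall>L. set D \<subseteq> set L \<and> 0 \<notin> set L \<longrightarrow> ap K L x \<in> KG" using carrGd xc unfolding Gd_def by auto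
  have "ap K D x = x" using ap_eig[OF Kc xc Kx'] by (simp add: prod_list_ones)
  thus "x \<in> diag_isotypic G m \<rho>A n \<rho>B" using D unfolding KG_def by auto
qed


theorem theorem5:
  fixes G :: "('g, 'b) monoid_scheme"
    and m n :: nat and \<rho>A \<rho>B :: "'g \<Rightarrow> complex mat" and TA TB :: "complex mat"
  assumes "group G" and "finite (carrier G)"
    and "unitary_rep G m \<rho>A" and "unitary_rep G n \<rho>B"
    and "TA \<in> End_G G m \<rho>A" and "TB \<in> End_G G n \<rho>B"
    and "self_adjoint TA" and "self_adjoint TB"
  defines "K \<equiv> kron TA (1\<^sub>m n) - kron (1\<^sub>m m) TB"
  shows "(\<forall>g\<in>carrier G. K * kron (\<rho>A g) (\<rho>B g) = kron (\<rho>A g) (\<rho>B g) * K)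
     \<and> (\<forall>a :: nat \<times> ('g \<Rightarrow> complex mat) \<Rightarrow> complex.
          (\<forall>lam\<in>irreps G. (\<forall>v\<in>isotypic G m \<rho>A lam. TA *\<^sub>v v = a lam \<cdot>\<^sub>v v) \<and>
                         (\<forall>v\<in>isotypic G n \<rho>B lam. TB *\<^sub>v v = a lam \<cdot>\<^sub>v v))
          \<longrightarrow> diag_isotypic G m \<rho>A n \<rho>B \<subseteq> ker_mat (m * n) K)
     \<and> (\<forall>z \<alpha>. z \<in> group_alg_center G \<and> TA = rep_alg G m \<rho>A z \<and> TB = rep_alg G n \<rho>B z
          \<and> (\<forall>lam\<in>irreps G. rep_alg G (fst lam) (snd lam) z = \<alpha> lam \<cdot>\<^sub>m 1\<^sub>m (fst lam))
          \<and> (\<forall>lam\<in>irreps G. \<forall>mu\<in>irreps G. \<alpha> lam = \<alpha> mu \<longrightarrow> equiv_rep G lam mu)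
          \<longrightarrow> ker_mat (m * n) K = diag_isotypic G m \<rho>A n \<rho>B)"
  proof -
  have TAc: "TA \<in> carrier_mat m m" and cA: "\<forall>g\<in>carrier G. TA * \<rho>A g = \<rho>A g * TA"
    using assms(5) unfolding End_G_def by auto
  have TBc: "TB \<in> carrier_mat n n" and cB: "\<forall>g\<in>carrier G. TB * \<rho>B g = \<rho>B g * TB"
    using assms(6) unfolding End_G_def by auto
  have i: "\<forall>g\<in>carrier G. K * kron (\<rho>A g) (\<rho>B g) = kron (\<rho>A g) (\<rho>B g) * K"
    unfolding K_def using part1[OF TAc TBc rep_carrier[OF assms(3)] rep_carrier[OF assms(4)]] cA cB by auto
  have ii: "\<forall>a :: nat \<times> ('g \<Rightarrow> complex mat) \<Rightarrow> complex.
          (\<forall>lam\<in>irreps G. (\<forall>v\<in>isotypic G m \<rho>A lam. TA *\<^sub>v v = a lam \<cdot>\<^sub>v v) \<and>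
                         (\<forall>v\<in>isotypic G n \<rho>B lam. TB *\<^sub>v v = a lam \<cdot>\<^sub>v v))
          \<longrightarrow> diag_isotypic G m \<rho>A n \<rho>B \<subseteq> ker_mat (m * n) K"
    unfolding K_def using part2[OF TAc TBc] by blast
  have iii: "ker_mat (m * n) K = diag_isotypic G m \<rho>A n \<rho>B"
    if h: "z \<in> group_alg_center G \<and> TA = rep_alg G m \<rho>A z \<and> TB = rep_alg G n \<rho>B z
          \<and> (\<forall>lam\<in>irreps G. rep_alg G (fst lam) (snd lam) z = \<alpha> lam \<cdot>\<^sub>m 1\<^sub>m (fst lam))
          \<and> (\<forall>lam\<in>irreps G. \<forall>mu\<in>irreps G. \<alpha> lam = \<alpha> mu \<longrightarrow> equiv_rep G lam mu)" for z \<alpha>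
  proof
    show "ker_mat (m * n) K \<subseteq> diag_isotypic G m \<rho>A n \<rho>B"
      unfolding K_def using h part3[OF assms(1,3,4), of z \<alpha>] by auto
    have "\<forall>lam\<in>irreps G. (\<forall>v\<in>isotypic G m \<rho>A lam. TA *\<^sub>v v = \<alpha> lam \<cdot>\<^sub>v v) \<and>
                         (\<forall>v\<in>isotypic G n \<rho>B lam. TB *\<^sub>v v = \<alpha> lam \<cdot>\<^sub>v v)"
      using h iso_scalar[OF assms(3)] iso_scalar[OF assms(4)] by auto
    thus "diag_isotypic G m \<rho>A n \<rho>B \<subseteq> ker_mat (m * n) K" using ii by blast
  qed
  show ?thesis using i ii iii by blast
qed

end
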